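(* Let $p$ be an odd prime and let $\alpha,\beta,\gamma\in\mathbb{Z}_p$ with $p\nmid\beta$ and $p\nmid\gamma$, and with $(\alpha,\beta-\gamma)\ne(0,0)$. Let $k\ge0$ be the largest integer such that $p^k\mid\alpha$ and $p^k\mid(\beta-\gamma)$. Let $$f(x)=(x^2+p\alpha x+p\beta)(x^2-p\alpha x+p\gamma).$$ (Case 1) If $p^{k+1}\nmid(\beta-\gamma)$, then every monic quartic $g\in\mathbb{Z}_p[x]$ with $g\equiv f\pmod{p^{2k+4}}$ is reducible in $\mathbb{Z}_p[x]$. (Case 2) If $p^{k+1}\mid(\beta-\gamma)$ and $p^{k+1}\nmid\alpha$, then every monic quartic $g\in\mathbb{Z}_p[x]$ with $g\equiv f\pmod{p^{2k+5}}$ is reducible in $\mathbb{Z}_p[x]$.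
   Context: Congruences of polynomials are coefficientwise. Reducible means it can be written as a product of two nonconstant polynomials in $\mathbb{Z}_p[x]$. *)

theory Defs
  imports "HOL-Algebra.Algebra" "HOL-Computational_Algebra.Primes"
begin

text \<open>The ring of p-adic integers Z_p, realised as the inverse limit of the rings
  Z/p^n Z: an element is a compatible sequence x with x n in {0..<p^n} and
  x n = x (n+1) mod p^n.\<close>

definition padic_int :: "nat \<Rightarrow> (nat \<Rightarrow> int) ring" where
  "padic_int p =
    \<lparr>carrier = {x. \<forall>n. 0 \<le> x n \<and> x n < int p ^ n \<and> x n = x (Suc n) mod (int p ^ n)},
     monoid.mult = (\<lambda>x y n. (x n * y n) mod (int p ^ n)),
     monoid.one = (\<lambda>n. 1 mod (int p ^ n)),
     ring.zero = (\<lambda>n. 0),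
     ring.add = (\<lambda>x y n. (x n + y n) mod (int p ^ n))\<rparr>"

definition padic_p :: "nat \<Rightarrow> (nat \<Rightarrow> int)" where
  "padic_p p = add_pow (padic_int p) p \<one>\<^bsub>padic_int p\<^esub>"

definition padic_poly_reducible :: "nat \<Rightarrow> (nat \<Rightarrow> nat \<Rightarrow> int) \<Rightarrow> bool" where
  "padic_poly_reducible p g \<longleftrightarrow>
     (\<exists>a\<in>carrier (UP (padic_int p)). \<exists>b\<in>carrier (UP (padic_int p)).
        deg (padic_int p) a > 0 \<and> deg (padic_int p) b > 0 \<and> g = a \<otimes>\<^bsub>UP (padic_int p)\<^esub> b)"

definition padic_poly_cong :: "nat \<Rightarrow> nat \<Rightarrow> (nat \<Rightarrow> nat \<Rightarrow> int) \<Rightarrow> (nat \<Rightarrow> nat \<Rightarrow> int) \<Rightarrow> bool" where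
  "padic_poly_cong p m g f \<longleftrightarrow>
     (\<forall>i. (padic_p p [^]\<^bsub>padic_int p\<^esub> m) divides\<^bsub>padic_int p\<^esub>
          (coeff (UP (padic_int p)) g i \<ominus>\<^bsub>padic_int p\<^esub> coeff (UP (padic_int p)) f i))"

end

theory Submission
  imports Defs
begin


lemma Zp_carrier: "x \<in> carrier (padic_int p) \<longleftrightarrow> (\<forall>n. 0 \<le> x n \<and> x n < int p ^ n \<and> x n = x (Suc n) mod (int p ^ n))"
  by (simp add: padic_int_def)
lemma Zp_add: "x \<oplus>\<^bsub>padic_int p\<^esub> y = (\<lambda>n. (x n + y n) mod (int p ^ n))"
  by (simp add: padic_int_def)
lemma Zp_mult: "x \<otimes>\<^bsub>padic_int p\<^esub> y = (\<lambda>n. (x n * y n) mod (int p ^ n))"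
  by (simp add: padic_int_def)
lemma Zp_one: "\<one>\<^bsub>padic_int p\<^esub> = (\<lambda>n. 1 mod (int p ^ n))"
  by (simp add: padic_int_def)
lemma Zp_zero: "\<zero>\<^bsub>padic_int p\<^esub> = (\<lambda>n. 0)"
  by (simp add: padic_int_def)

lemma Zp_comp_le:
  assumes "x \<in> carrier (padic_int p)" "m \<le> n"
  shows "x m = x n mod (int p ^ m)"
  using assms(2)
proof (induction n rule: dec_induct)
  case base
  have "0 \<le> x m" "x m < int p ^ m" using assms(1) unfolding Zp_carrier by blast+
  then show ?case by simp
next
  case (step n)
  have 1: "x n = x (Suc n) mod (int p ^ n)" using assms(1) unfolding Zp_carrier by blast
  have 2: "int p ^ m dvd int p ^ n" using step(1) by (simp add: le_imp_power_dvd)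
  have "x m = x (Suc n) mod (int p ^ n) mod (int p ^ m)" using step(3) 1 by simp
  also have "\<dots> = x (Suc n) mod (int p ^ m)" using 2 by (rule mod_mod_cancel)
  finally show ?case .
qed

lemma Zp_range: "x \<in> carrier (padic_int p) \<Longrightarrow> 0 \<le> x n \<and> x n < int p ^ n"
  unfolding Zp_carrier by blast
lemma Zp_suc: "x \<in> carrier (padic_int p) \<Longrightarrow> x n = x (Suc n) mod (int p ^ n)"
  unfolding Zp_carrier by blast

lemma mod_suc_aux: "(a::int) mod (q ^ Suc n) mod (q ^ n) = a mod (q ^ n)"
  by (rule mod_mod_cancel) (simp add: le_imp_power_dvd)

lemma Zp_add_closed: assumes x: "x \<in> carrier (padic_int p)" and y: "y \<in> carrier (padic_int p)" and "p \<ge> 1"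
  shows "x \<oplus>\<^bsub>padic_int p\<^esub> y \<in> carrier (padic_int p)"
  unfolding Zp_carrier Zp_add
proof (intro allI conjI)
  fix n
  have pos: "int p ^ n > 0" using assms(3) by simp
  show "0 \<le> (x n + y n) mod int p ^ n" "(x n + y n) mod int p ^ n < int p ^ n" using pos by simp_all
  show "(x n + y n) mod int p ^ n = (x (Suc n) + y (Suc n)) mod int p ^ Suc n mod int p ^ n"
    unfolding mod_suc_aux Zp_suc[OF x, of n] Zp_suc[OF y, of n] by (simp add: mod_add_eq)
qed

lemma Zp_mult_closed: assumes x: "x \<in> carrier (padic_int p)" and y: "y \<in> carrier (padic_int p)" and "p \<ge> 1"
  shows "x \<otimes>\<^bsub>padic_int p\<^esub> y \<in> carrier (padic_int p)"
  unfolding Zp_carrier Zp_mult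
proof (intro allI conjI)
  fix n
  have pos: "int p ^ n > 0" using assms(3) by simp
  show "0 \<le> (x n * y n) mod int p ^ n" "(x n * y n) mod int p ^ n < int p ^ n" using pos by simp_all
  show "(x n * y n) mod int p ^ n = (x (Suc n) * y (Suc n)) mod int p ^ Suc n mod int p ^ n"
    unfolding mod_suc_aux Zp_suc[OF x, of n] Zp_suc[OF y, of n] by (simp add: mod_mult_eq)
qed

lemma Zp_neg_closed: assumes x: "x \<in> carrier (padic_int p)" and "p \<ge> 1"
  shows "(\<lambda>n. (- x n) mod (int p ^ n)) \<in> carrier (padic_int p)"
  unfolding Zp_carrier
proof (intro allI conjI)
  fix n
  have pos: "int p ^ n > 0" using assms(2) by simp
  show "0 \<le> (- x n) mod int p ^ n" "(- x n) mod int p ^ n < int p ^ n" using pos by simp_all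
  show "(- x n) mod int p ^ n = (- x (Suc n)) mod int p ^ Suc n mod int p ^ n"
    unfolding mod_suc_aux Zp_suc[OF x, of n] by (simp add: mod_minus_eq)
qed

lemma Zp_one_closed: "p \<ge> 1 \<Longrightarrow> \<one>\<^bsub>padic_int p\<^esub> \<in> carrier (padic_int p)"
  unfolding Zp_carrier Zp_one using mod_suc_aux[of 1 "int p"] by auto

lemma Zp_zero_closed: "p \<ge> 1 \<Longrightarrow> \<zero>\<^bsub>padic_int p\<^esub> \<in> carrier (padic_int p)"
  unfolding Zp_carrier Zp_zero by simp

lemma Zp_self_mod: "x \<in> carrier (padic_int p) \<Longrightarrow> x n mod (int p ^ n) = x n"
  using Zp_range[of x p n] by simp

lemma Zp_cring: assumes "p \<ge> 1" shows "cring (padic_int p)"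
proof (rule cringI)
  show "abelian_group (padic_int p)"
  proof (rule abelian_groupI)
    fix x y z assume x: "x \<in> carrier (padic_int p)" and y: "y \<in> carrier (padic_int p)" and z: "z \<in> carrier (padic_int p)"
    show "x \<oplus>\<^bsub>padic_int p\<^esub> y \<in> carrier (padic_int p)" using Zp_add_closed x y assms by blast
    show "(x \<oplus>\<^bsub>padic_int p\<^esub> y) \<oplus>\<^bsub>padic_int p\<^esub> z = x \<oplus>\<^bsub>padic_int p\<^esub> (y \<oplus>\<^bsub>padic_int p\<^esub> z)"
      unfolding Zp_add by (rule ext) (simp add: mod_add_left_eq mod_add_right_eq add.assoc)
    show "x \<oplus>\<^bsub>padic_int p\<^esub> y = y \<oplus>\<^bsub>padic_int p\<^esub> x" unfolding Zp_add by (simp add: add.commute)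
  next
    show "\<zero>\<^bsub>padic_int p\<^esub> \<in> carrier (padic_int p)" using Zp_zero_closed assms by blast
  next
    fix x assume x: "x \<in> carrier (padic_int p)"
    show "\<zero>\<^bsub>padic_int p\<^esub> \<oplus>\<^bsub>padic_int p\<^esub> x = x" unfolding Zp_add Zp_zero
      using Zp_self_mod[OF x] by simp
    show "\<exists>y\<in>carrier (padic_int p). y \<oplus>\<^bsub>padic_int p\<^esub> x = \<zero>\<^bsub>padic_int p\<^esub>"
      apply (rule bexI[of _ "\<lambda>n. (- x n) mod (int p ^ n)"])
       apply (simp add: Zp_add Zp_zero mod_add_left_eq)
      using Zp_neg_closed[OF x assms] .
  qed
next
  show "comm_monoid (padic_int p)"
  proof (rule comm_monoidI)
    fix x y z assume x: "x \<in> carrier (padic_int p)" and y: "y \<in> carrier (padic_int p)" and z: "z \<in> carrier (padic_int p)"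
    show "x \<otimes>\<^bsub>padic_int p\<^esub> y \<in> carrier (padic_int p)" using Zp_mult_closed x y assms by blast
    show "(x \<otimes>\<^bsub>padic_int p\<^esub> y) \<otimes>\<^bsub>padic_int p\<^esub> z = x \<otimes>\<^bsub>padic_int p\<^esub> (y \<otimes>\<^bsub>padic_int p\<^esub> z)"
      unfolding Zp_mult by (rule ext) (simp add: mod_mult_left_eq mod_mult_right_eq mult.assoc)
    show "x \<otimes>\<^bsub>padic_int p\<^esub> y = y \<otimes>\<^bsub>padic_int p\<^esub> x" unfolding Zp_mult by (simp add: mult.commute)
  next
    show "\<one>\<^bsub>padic_int p\<^esub> \<in> carrier (padic_int p)" using Zp_one_closed assms by blast
  next
    fix x assume x: "x \<in> carrier (padic_int p)"
    show "\<one>\<^bsub>padic_int p\<^esub> \<otimes>\<^bsub>padic_int p\<^esub> x = x" unfolding Zp_mult Zp_one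
      using Zp_self_mod[OF x] by (simp add: mod_mult_left_eq)
  qed
next
  fix x y z
  show "(x \<oplus>\<^bsub>padic_int p\<^esub> y) \<otimes>\<^bsub>padic_int p\<^esub> z = x \<otimes>\<^bsub>padic_int p\<^esub> z \<oplus>\<^bsub>padic_int p\<^esub> y \<otimes>\<^bsub>padic_int p\<^esub> z"
    unfolding Zp_mult Zp_add by (rule ext) (simp add: mod_add_eq mod_mult_left_eq mod_mult_right_eq distrib_right)
qed


locale padic_loc =
  fixes p :: nat and Z (structure)
  defines Z_def: "Z \<equiv> padic_int p"
  assumes prime_p: "Factorial_Ring.prime p"
begin

lemma p_ge2: "p \<ge> 2" using prime_p by (simp add: prime_ge_2_nat)
lemma p_ge1: "p \<ge> 1" using p_ge2 by simp
lemma ppos: "int p ^ n > 0" using p_ge1 by simp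

sublocale cring Z unfolding Z_def using Zp_cring p_ge1 by blast

lemma cadd: "(x \<oplus> y) n = (x n + y n) mod (int p ^ n)" unfolding Z_def Zp_add by simp
lemma cmult: "(x \<otimes> y) n = (x n * y n) mod (int p ^ n)" unfolding Z_def Zp_mult by simp
lemma cone: "\<one> n = 1 mod (int p ^ n)" unfolding Z_def Zp_one by simp
lemma czero: "\<zero> n = 0" unfolding Z_def Zp_zero by simp
lemma crange: "x \<in> carrier Z \<Longrightarrow> 0 \<le> x n \<and> x n < int p ^ n" unfolding Z_def by (rule Zp_range)
lemma cself: "x \<in> carrier Z \<Longrightarrow> x n mod (int p ^ n) = x n" unfolding Z_def by (rule Zp_self_mod)
lemma cle: "x \<in> carrier Z \<Longrightarrow> m \<le> n \<Longrightarrow> x m = x n mod (int p ^ m)" unfolding Z_def by (rule Zp_comp_le)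

lemma cneg: assumes "x \<in> carrier Z" shows "(\<ominus> x) n = (- x n) mod (int p ^ n)"
proof -
  have "\<ominus> x = (\<lambda>n. (- x n) mod (int p ^ n))"
  proof (rule minus_equality)
    show "(\<lambda>n. (- x n) mod (int p ^ n)) \<oplus> x = \<zero>"
      by (rule ext) (simp add: cadd czero mod_add_left_eq)
    show "x \<in> carrier Z" by fact
    show "(\<lambda>n. (- x n) mod (int p ^ n)) \<in> carrier Z" unfolding Z_def using Zp_neg_closed assms p_ge1 Z_def by blast
  qed
  then show ?thesis by simp
qed

lemma cminus: assumes "x \<in> carrier Z" "y \<in> carrier Z" shows "(x \<ominus> y) n = (x n - y n) mod (int p ^ n)"
  unfolding a_minus_def cadd cneg[OF assms(2)] by (simp add: mod_add_right_eq)

lemma ceqI: "(\<And>n. x n = y n) \<Longrightarrow> x = y" by (rule ext)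

definition P where "P = padic_p p"

lemma P_def': "P = [p] \<cdot> \<one>" unfolding P_def padic_p_def Z_def by simp

lemma P_carrier [simp]: "P \<in> carrier Z" unfolding P_def' by simp

lemma addpow_one: "([k] \<cdot> \<one>) n = int k mod (int p ^ n)"
proof (induction k)
  case 0 then show ?case by (simp add: czero)
next
  case (Suc k)
  have "([Suc k] \<cdot> \<one>) = [k] \<cdot> \<one> \<oplus> \<one>" by (simp add: add.nat_pow_Suc)
  then show ?case using Suc by (simp add: cadd cone mod_add_eq add.commute)
qed

lemma cP: "P n = int p mod (int p ^ n)" unfolding P_def' addpow_one by simp

lemma cpow: assumes "x \<in> carrier Z" shows "(x [^] (k::nat)) n = (x n) ^ k mod (int p ^ n)"
proof (induction k)
  case 0 then show ?case by (simp add: cone)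
next
  case (Suc k)
  show ?case using Suc by (simp add: cmult mod_mult_left_eq mod_mult_right_eq mult.commute)
qed

lemma cPpow: "(P [^] (k::nat)) n = (int p) ^ k mod (int p ^ n)"
  unfolding cpow[OF P_carrier] cP by (simp add: power_mod)

definition dv :: "nat \<Rightarrow> (nat \<Rightarrow> int) \<Rightarrow> bool" where "dv n z \<longleftrightarrow> z n = 0"

lemma dv_zero [simp]: "dv n \<zero>" by (simp add: dv_def czero)

lemma dv_add: "dv n x \<Longrightarrow> dv n y \<Longrightarrow> dv n (x \<oplus> y)" by (simp add: dv_def cadd)
lemma dv_neg: "x \<in> carrier Z \<Longrightarrow> dv n x \<Longrightarrow> dv n (\<ominus> x)" by (simp add: dv_def cneg)
lemma dv_minus: "x \<in> carrier Z \<Longrightarrow> y \<in> carrier Z \<Longrightarrow> dv n x \<Longrightarrow> dv n y \<Longrightarrow> dv n (x \<ominus> y)"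
  by (simp add: dv_def cminus)
lemma dv_multL: "dv n x \<Longrightarrow> dv n (x \<otimes> y)" by (simp add: dv_def cmult)
lemma dv_multR: "dv n y \<Longrightarrow> dv n (x \<otimes> y)" by (simp add: dv_def cmult)

lemma dv_iff_dvd: assumes "x \<in> carrier Z" "m \<le> n" shows "dv m x \<longleftrightarrow> int p ^ m dvd x n"
proof -
  have "x m = x n mod (int p ^ m)" using cle[OF assms] .
  then show ?thesis unfolding dv_def by (simp add: dvd_eq_mod_eq_0)
qed

lemma dv_mono: assumes "x \<in> carrier Z" "m \<le> n" "dv n x" shows "dv m x"
proof -
  have "int p ^ n dvd x n" using dv_iff_dvd[OF assms(1), of n n] assms(3) by simp
  moreover have "int p ^ m dvd int p ^ n" using assms(2) by (simp add: le_imp_power_dvd)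
  ultimately show ?thesis using dv_iff_dvd[OF assms(1,2)] dvd_trans by blast
qed

lemma dv_mult2: assumes "x \<in> carrier Z" "y \<in> carrier Z" "dv a x" "dv b y" shows "dv (a+b) (x \<otimes> y)"
proof -
  have "int p ^ a dvd x (a+b)" using dv_iff_dvd[OF assms(1), of a "a+b"] assms(3) by simp
  moreover have "int p ^ b dvd y (a+b)" using dv_iff_dvd[OF assms(2), of b "a+b"] assms(4) by simp
  ultimately have "int p ^ (a+b) dvd x (a+b) * y (a+b)" by (simp add: power_add mult_dvd_mono)
  then show ?thesis unfolding dv_def cmult by simp
qed

lemma dv_Ppow: "dv k (P [^] k)" unfolding dv_def cPpow by simp
lemma dv_Ppow_mult: "dv k (P [^] k \<otimes> y)" using dv_Ppow dv_multL by blast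

lemma dv_all: assumes "\<And>n. dv n z" shows "z = \<zero>"
  using assms by (intro ext) (simp add: dv_def czero)

lemma dv_factor: assumes z: "z \<in> carrier Z" and d: "dv n z" shows "\<exists>y\<in>carrier Z. z = P [^] n \<otimes> y"
proof -
  define q where "q = int p ^ n"
  have qpos: "q > 0" using ppos q_def by simp
  have dvdz: "\<And>i. q dvd z (i + n)" using dv_iff_dvd[OF z, of n] d q_def by simp
  define y where "y = (\<lambda>i. z (i + n) div q)"
  have zy: "\<And>i. z (i + n) = q * y i" using dvdz y_def by simp
  have ycar: "y \<in> carrier Z"
    unfolding Z_def Zp_carrier
  proof (intro allI conjI)
    fix i
    have r: "0 \<le> z (i+n)" "z (i+n) < int p ^ (i+n)" using crange[OF z] by auto
    show "0 \<le> y i" unfolding y_def using r qpos by (simp add: pos_imp_zdiv_nonneg_iff)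
    have "q * y i < q * int p ^ i" using r zy[of i] by (simp add: q_def power_add mult.commute)
    then show "y i < int p ^ i" using qpos by simp
    have "z (i+n) = z (Suc i + n) mod (int p ^ (i+n))" using cle[OF z, of "i+n" "Suc i + n"] by simp
    then have "q * y i = (q * y (Suc i)) mod (q * int p ^ i)"
      using zy[of i] zy[of "Suc i"] by (simp add: q_def power_add mult.commute)
    then have "q * y i = q * (y (Suc i) mod int p ^ i)" by (simp only: mult_mod_right)
    then show "y i = y (Suc i) mod int p ^ i" using qpos by simp
  qed
  have "z = P [^] n \<otimes> y"
  proof (rule ext)
    fix i
    have "(P [^] n \<otimes> y) i = ((int p ^ n mod int p ^ i) * y i) mod int p ^ i" by (simp add: cmult cPpow)
    also have "\<dots> = (int p ^ n * y i) mod int p ^ i" by (simp add: mod_mult_left_eq)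
    also have "\<dots> = z (i + n) mod int p ^ i" using zy[of i] q_def by simp
    also have "\<dots> = z i" using cle[OF z, of i "i+n"] by simp
    finally show "z i = (P [^] n \<otimes> y) i" by simp
  qed
  then show ?thesis using ycar by blast
qed

lemma divides_iff_dv: assumes "z \<in> carrier Z" shows "(P [^] (n::nat)) divides z \<longleftrightarrow> dv n z"
  unfolding factor_def using dv_factor[OF assms] dv_Ppow_mult by blast

lemma cancel_P: assumes x: "x \<in> carrier Z" and e: "P [^] (k::nat) \<otimes> x = \<zero>" shows "x = \<zero>"
proof (rule ext)
  fix j
  have "(P [^] k \<otimes> x) (j + k) = 0" using e by (simp add: czero)
  then have "((int p ^ k mod int p ^ (j+k)) * x (j+k)) mod int p ^ (j+k) = 0" by (simp add: cmult cPpow)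
  then have "(int p ^ k * x (j+k)) mod int p ^ (j+k) = 0"
    by (simp only: mod_mult_left_eq)
  then have "int p ^ (j+k) dvd int p ^ k * x (j+k)" by (simp only: dvd_eq_mod_eq_0)
  then have "int p ^ k * int p ^ j dvd int p ^ k * x (j+k)" by (simp only: power_add mult.commute)
  then have "int p ^ j dvd x (j+k)" using ppos[of k] p_ge1 by simp
  then show "x j = \<zero> j" using cle[OF x, of j "j+k"] by (simp add: czero dvd_eq_mod_eq_0)
qed

lemma unit_inv: assumes x: "x \<in> carrier Z" and u: "x 1 \<noteq> 0" shows "\<exists>y\<in>carrier Z. x \<otimes> y = \<one>"
proof -
  have cop: "coprime (x n) (int p ^ n)" for n
  proof (cases "n = 0")
    case True then show ?thesis by simp
  next
    case False
    have "x 1 = x n mod int p" using cle[OF x, of 1 n] False by simp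
    then have "\<not> int p dvd x n" using u by (simp add: dvd_eq_mod_eq_0)
    moreover have "Factorial_Ring.prime (int p)" using prime_p by simp
    ultimately have "coprime (int p) (x n)" by (simp add: prime_imp_coprime)
    then show ?thesis by (simp add: coprime_commute)
  qed
  have ex: "\<exists>u. (x n * u) mod int p ^ n = 1 mod int p ^ n" for n
  proof -
    obtain u v where "u * x n + v * int p ^ n = gcd (x n) (int p ^ n)" using bezout_int by blast
    then have "u * x n + v * int p ^ n = 1" using cop[of n] by simp
    then have "x n * u = 1 - v * int p ^ n" by (simp add: algebra_simps)
    then have "(x n * u) mod int p ^ n = (1 - v * int p ^ n) mod int p ^ n" by simp
    also have "\<dots> = 1 mod int p ^ n" by (simp add: mod_diff_eq[symmetric])
    finally show ?thesis by blast
  qed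
  have uniq: "a = b" if "(x n * a) mod int p ^ n = 1 mod int p ^ n" "(x n * b) mod int p ^ n = 1 mod int p ^ n"
      "0 \<le> a" "a < int p ^ n" "0 \<le> b" "b < int p ^ n" for n a b
  proof -
    have "(b * (x n * a)) mod int p ^ n = (b * 1) mod int p ^ n" using that(1) by (metis mod_mult_right_eq)
    moreover have "(a * (x n * b)) mod int p ^ n = (a * 1) mod int p ^ n" using that(2) by (metis mod_mult_right_eq)
    ultimately have "a mod int p ^ n = b mod int p ^ n" by (simp add: algebra_simps)
    then show ?thesis using that by simp
  qed
  define y where "y = (\<lambda>n. (SOME u. (x n * u) mod int p ^ n = 1 mod int p ^ n) mod int p ^ n)"
  have yinv: "(x n * y n) mod int p ^ n = 1 mod int p ^ n" for n
  proof -
    have "(x n * (SOME u. (x n * u) mod int p ^ n = 1 mod int p ^ n)) mod int p ^ n = 1 mod int p ^ n"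
      using someI_ex[OF ex[of n]] .
    then show ?thesis unfolding y_def by (simp add: mod_mult_right_eq)
  qed
  have yr: "0 \<le> y n \<and> y n < int p ^ n" for n using ppos[of n] by (simp add: y_def)
  have ycar: "y \<in> carrier Z"
    unfolding Z_def Zp_carrier
  proof (intro allI conjI)
    fix n
    show "0 \<le> y n" "y n < int p ^ n" using yr by auto
    have "(x (Suc n) * y (Suc n)) mod int p ^ n = 1 mod int p ^ n"
      using yinv[of "Suc n"] mod_suc_aux[of "x (Suc n) * y (Suc n)" "int p" n] mod_suc_aux[of 1 "int p" n] by simp
    moreover have "x n = x (Suc n) mod int p ^ n" using cle[OF x, of n "Suc n"] by simp
    ultimately have "(x n * (y (Suc n) mod int p ^ n)) mod int p ^ n = 1 mod int p ^ n"
      by (simp add: mod_mult_left_eq mod_mult_right_eq)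
    then show "y n = y (Suc n) mod int p ^ n"
      using uniq[OF yinv[of n]] yr[of n] ppos[of n] by simp
  qed
  have "x \<otimes> y = \<one>" by (rule ext) (simp add: cmult cone yinv)
  then show ?thesis using ycar by blast
qed

end

context padic_loc begin

definition err3 where "err3 g3 a1 b1 a2 b2 = g3 \<ominus> (a1 \<oplus> a2)"
definition err2 where "err2 g2 a1 b1 a2 b2 = g2 \<ominus> (b1 \<oplus> b2 \<oplus> a1 \<otimes> a2)"
definition err1 where "err1 g1 a1 b1 a2 b2 = g1 \<ominus> (a1 \<otimes> b2 \<oplus> a2 \<otimes> b1)"
definition err0 where "err0 g0 a1 b1 a2 b2 = g0 \<ominus> b1 \<otimes> b2"

definition detf where "detf a1 b1 a2 b2 =
   (b1 \<ominus> b2) \<otimes> (b1 \<ominus> b2) \<ominus> a1 \<otimes> (a1 \<ominus> a2) \<otimes> (b1 \<ominus> b2) \<oplus> b1 \<otimes> (a1 \<ominus> a2) \<otimes> (a1 \<ominus> a2)"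

lemma dv_mult2': "x \<in> carrier Z \<Longrightarrow> y \<in> carrier Z \<Longrightarrow> dv a x \<Longrightarrow> dv a y \<Longrightarrow> b \<le> a + a \<Longrightarrow> dv b (x \<otimes> y)"
  using dv_mult2[of x y a a] dv_mono[of "x \<otimes> y" b "a+a"] by simp

lemma step:
  assumes car: "a1 \<in> carrier Z" "b1 \<in> carrier Z" "a2 \<in> carrier Z" "b2 \<in> carrier Z"
    and gcar: "g0 \<in> carrier Z" "g1 \<in> carrier Z" "g2 \<in> carrier Z" "g3 \<in> carrier Z"
    and Dc: "D' \<in> carrier Z" "b1 \<ominus> b2 = P [^] K \<otimes> D'"
    and Ec: "E' \<in> carrier Z" "a1 \<ominus> a2 = P [^] K \<otimes> E'"
    and wc: "w \<in> carrier Z" "wi \<in> carrier Z" "w \<otimes> wi = \<one>"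
    and detc: "detf a1 b1 a2 b2 = P [^] (K + m) \<otimes> w"
    and e3: "e3' \<in> carrier Z" "err3 g3 a1 b1 a2 b2 = P [^] N \<otimes> e3'"
    and e2: "e2' \<in> carrier Z" "err2 g2 a1 b1 a2 b2 = P [^] N \<otimes> e2'"
    and e1: "e1' \<in> carrier Z" "err1 g1 a1 b1 a2 b2 = P [^] N \<otimes> e1'"
    and e0: "e0' \<in> carrier Z" "err0 g0 a1 b1 a2 b2 = P [^] N \<otimes> e0'"
    and Nm: "2 * m + 1 \<le> N"
  shows "\<exists>s1\<in>carrier Z. \<exists>t1\<in>carrier Z. \<exists>s2\<in>carrier Z. \<exists>t2\<in>carrier Z.
           dv (N - m) s1 \<and> dv (N - m) t1 \<and> dv (N - m) s2 \<and> dv (N - m) t2 \<and>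
           dv (Suc N) (err3 g3 (a1 \<oplus> s1) (b1 \<oplus> t1) (a2 \<oplus> s2) (b2 \<oplus> t2)) \<and>
           dv (Suc N) (err2 g2 (a1 \<oplus> s1) (b1 \<oplus> t1) (a2 \<oplus> s2) (b2 \<oplus> t2)) \<and>
           dv (Suc N) (err1 g1 (a1 \<oplus> s1) (b1 \<oplus> t1) (a2 \<oplus> s2) (b2 \<oplus> t2)) \<and>
           dv (Suc N) (err0 g0 (a1 \<oplus> s1) (b1 \<oplus> t1) (a2 \<oplus> s2) (b2 \<oplus> t2))"
proof -
  note cc = car gcar Dc(1) Ec(1) wc(1,2) e3(1) e2(1) e1(1) e0(1)
  define e3v where "e3v = err3 g3 a1 b1 a2 b2"
  define e2v where "e2v = err2 g2 a1 b1 a2 b2"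
  define e1v where "e1v = err1 g1 a1 b1 a2 b2"
  define e0v where "e0v = err0 g0 a1 b1 a2 b2"
  have ec: "e3v \<in> carrier Z" "e2v \<in> carrier Z" "e1v \<in> carrier Z" "e0v \<in> carrier Z"
    using cc by (simp_all add: e3v_def e2v_def e1v_def e0v_def err3_def err2_def err1_def err0_def)
  define D where "D = b1 \<ominus> b2"
  define E where "E = a1 \<ominus> a2"
  define det where "det = detf a1 b1 a2 b2"
  have DEc: "D \<in> carrier Z" "E \<in> carrier Z" "det \<in> carrier Z"
    using cc by (simp_all add: D_def E_def det_def detf_def)
  define PK where "PK = P [^] K"
  define PN where "PN = P [^] N"
  define PNm where "PNm = P [^] (N - m)"
  define PKm where "PKm = P [^] (K + m)"
  have Pc: "PK \<in> carrier Z" "PN \<in> carrier Z" "PNm \<in> carrier Z" "PKm \<in> carrier Z"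
    by (simp_all add: PK_def PN_def PNm_def PKm_def)
  have PP: "PKm \<otimes> PNm = PK \<otimes> PN"
  proof -
    have "PKm \<otimes> PNm = P [^] (K + m + (N - m))" unfolding PKm_def PNm_def by (simp add: nat_pow_mult)
    also have "K + m + (N - m) = K + N" using Nm by simp
    also have "P [^] (K + N) = PK \<otimes> PN" unfolding PK_def PN_def by (simp add: nat_pow_mult)
    finally show ?thesis .
  qed
  define r1 where "r1 = e1v \<ominus> b1 \<otimes> e3v \<ominus> a1 \<otimes> e2v \<oplus> a1 \<otimes> a1 \<otimes> e3v"
  define r0 where "r0 = e0v \<ominus> b1 \<otimes> e2v \<oplus> a1 \<otimes> b1 \<otimes> e3v"
  define r1' where "r1' = e1' \<ominus> b1 \<otimes> e3' \<ominus> a1 \<otimes> e2' \<oplus> a1 \<otimes> a1 \<otimes> e3'"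
  define r0' where "r0' = e0' \<ominus> b1 \<otimes> e2' \<oplus> a1 \<otimes> b1 \<otimes> e3'"
  have rc: "r1 \<in> carrier Z" "r0 \<in> carrier Z" "r1' \<in> carrier Z" "r0' \<in> carrier Z"
    using cc ec by (simp_all add: r1_def r0_def r1'_def r0'_def)
  have hr1: "r1 = PN \<otimes> r1'"
  proof -
    have "r1 = PN \<otimes> e1' \<ominus> b1 \<otimes> (PN \<otimes> e3') \<ominus> a1 \<otimes> (PN \<otimes> e2') \<oplus> a1 \<otimes> a1 \<otimes> (PN \<otimes> e3')"
      unfolding r1_def e1v_def e2v_def e3v_def e1(2) e2(2) e3(2) PN_def ..
    also have "\<dots> = PN \<otimes> r1'" unfolding r1'_def using cc Pc by algebra
    finally show ?thesis .
  qed
  have hr0: "r0 = PN \<otimes> r0'"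
  proof -
    have "r0 = PN \<otimes> e0' \<ominus> b1 \<otimes> (PN \<otimes> e2') \<oplus> a1 \<otimes> b1 \<otimes> (PN \<otimes> e3')"
      unfolding r0_def e0v_def e2v_def e3v_def e0(2) e2(2) e3(2) PN_def ..
    also have "\<dots> = PN \<otimes> r0'" unfolding r0'_def using cc Pc by algebra
    finally show ?thesis .
  qed
  have hD: "D = PK \<otimes> D'" unfolding D_def PK_def Dc(2) ..
  have hE: "E = PK \<otimes> E'" unfolding E_def PK_def Ec(2) ..
  have hdet: "det = PKm \<otimes> w" unfolding det_def PKm_def detc ..
  define X1 where "X1 = \<ominus> D' \<otimes> r1' \<oplus> E' \<otimes> r0'"
  define X2 where "X2 = (a1 \<otimes> E' \<ominus> D') \<otimes> r0' \<ominus> b1 \<otimes> E' \<otimes> r1'"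
  have Xc: "X1 \<in> carrier Z" "X2 \<in> carrier Z" using cc rc by (simp_all add: X1_def X2_def)
  define s1 where "s1 = wi \<otimes> PNm \<otimes> X1"
  define t1 where "t1 = wi \<otimes> PNm \<otimes> X2"
  define s2 where "s2 = e3v \<ominus> s1"
  define t2 where "t2 = e2v \<ominus> a1 \<otimes> e3v \<oplus> E \<otimes> s1 \<ominus> t1"
  have stc: "s1 \<in> carrier Z" "t1 \<in> carrier Z" "s2 \<in> carrier Z" "t2 \<in> carrier Z"
    using cc Pc Xc ec DEc by (simp_all add: s1_def t1_def s2_def t2_def)
  have key1: "det \<otimes> s1 = \<ominus> D \<otimes> r1 \<oplus> E \<otimes> r0"
  proof -
    have "det \<otimes> s1 = (PKm \<otimes> PNm) \<otimes> (w \<otimes> wi) \<otimes> X1" unfolding hdet s1_def using cc Pc Xc by algebra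
    also have "\<dots> = PK \<otimes> PN \<otimes> X1" unfolding PP wc(3) using cc Pc Xc by (simp add: m_assoc)
    also have "\<dots> = \<ominus> (PK \<otimes> D') \<otimes> (PN \<otimes> r1') \<oplus> (PK \<otimes> E') \<otimes> (PN \<otimes> r0')" unfolding X1_def using cc Pc rc by algebra
    also have "\<dots> = \<ominus> D \<otimes> r1 \<oplus> E \<otimes> r0" unfolding hD hE hr1 hr0 ..
    finally show ?thesis .
  qed
  have key2: "det \<otimes> t1 = (a1 \<otimes> E \<ominus> D) \<otimes> r0 \<ominus> b1 \<otimes> E \<otimes> r1"
  proof -
    have "det \<otimes> t1 = (PKm \<otimes> PNm) \<otimes> (w \<otimes> wi) \<otimes> X2" unfolding hdet t1_def using cc Pc Xc by algebra
    also have "\<dots> = PK \<otimes> PN \<otimes> X2" unfolding PP wc(3) using cc Pc Xc by (simp add: m_assoc)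
    also have "\<dots> = (a1 \<otimes> (PK \<otimes> E') \<ominus> (PK \<otimes> D')) \<otimes> (PN \<otimes> r0') \<ominus> b1 \<otimes> (PK \<otimes> E') \<otimes> (PN \<otimes> r1')"
      unfolding X2_def using cc Pc rc by algebra
    also have "\<dots> = (a1 \<otimes> E \<ominus> D) \<otimes> r0 \<ominus> b1 \<otimes> E \<otimes> r1" unfolding hD hE hr1 hr0 ..
    finally show ?thesis .
  qed
  have detexp: "det = D \<otimes> D \<ominus> a1 \<otimes> E \<otimes> D \<oplus> b1 \<otimes> E \<otimes> E"
    unfolding det_def detf_def D_def E_def ..
  have cancel: "y = \<zero>" if yc: "y \<in> carrier Z" and dy: "det \<otimes> y = \<zero>" for y
  proof -
    have "PKm \<otimes> (w \<otimes> y) = \<zero>" using dy unfolding hdet using cc Pc yc by (simp add: m_assoc)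
    then have "w \<otimes> y = \<zero>" using cancel_P[of "w \<otimes> y" "K + m"] cc yc unfolding PKm_def by simp
    then have "wi \<otimes> (w \<otimes> y) = \<zero>" using cc by simp
    moreover have "wi \<otimes> (w \<otimes> y) = (w \<otimes> wi) \<otimes> y" using cc yc by algebra
    ultimately show ?thesis using wc(3) yc by simp
  qed
  define L1 where "L1 = e1v \<ominus> (a1 \<otimes> t2 \<oplus> s1 \<otimes> b2 \<oplus> a2 \<otimes> t1 \<oplus> s2 \<otimes> b1)"
  define L0 where "L0 = e0v \<ominus> (b1 \<otimes> t2 \<oplus> b2 \<otimes> t1)"
  have Lc: "L1 \<in> carrier Z" "L0 \<in> carrier Z" using cc ec stc by (simp_all add: L1_def L0_def)
  have L1eq: "L1 = r1 \<ominus> ((a1 \<otimes> E \<ominus> D) \<otimes> s1 \<ominus> E \<otimes> t1)"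
    unfolding L1_def r1_def t2_def s2_def D_def E_def using cc ec stc by algebra
  have L0eq: "L0 = r0 \<ominus> (b1 \<otimes> E \<otimes> s1 \<ominus> D \<otimes> t1)"
    unfolding L0_def r0_def t2_def s2_def D_def E_def using cc ec stc by algebra
  have "det \<otimes> L1 = det \<otimes> r1 \<ominus> ((a1 \<otimes> E \<ominus> D) \<otimes> (det \<otimes> s1) \<ominus> E \<otimes> (det \<otimes> t1))"
    unfolding L1eq using cc DEc rc stc by algebra
  also have "\<dots> = det \<otimes> r1 \<ominus> ((a1 \<otimes> E \<ominus> D) \<otimes> (\<ominus> D \<otimes> r1 \<oplus> E \<otimes> r0) \<ominus> E \<otimes> ((a1 \<otimes> E \<ominus> D) \<otimes> r0 \<ominus> b1 \<otimes> E \<otimes> r1))"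
    unfolding key1 key2 ..
  also have "\<dots> = \<zero>" unfolding detexp using cc DEc rc by algebra
  finally have L1z: "L1 = \<zero>" using cancel Lc by blast
  have "det \<otimes> L0 = det \<otimes> r0 \<ominus> (b1 \<otimes> E \<otimes> (det \<otimes> s1) \<ominus> D \<otimes> (det \<otimes> t1))"
    unfolding L0eq using cc DEc rc stc by algebra
  also have "\<dots> = det \<otimes> r0 \<ominus> (b1 \<otimes> E \<otimes> (\<ominus> D \<otimes> r1 \<oplus> E \<otimes> r0) \<ominus> D \<otimes> ((a1 \<otimes> E \<ominus> D) \<otimes> r0 \<ominus> b1 \<otimes> E \<otimes> r1))"
    unfolding key1 key2 ..
  also have "\<dots> = \<zero>" unfolding detexp using cc DEc rc by algebra
  finally have L0z: "L0 = \<zero>" using cancel Lc by blast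
  have n3: "err3 g3 (a1 \<oplus> s1) (b1 \<oplus> t1) (a2 \<oplus> s2) (b2 \<oplus> t2) = \<zero>"
    unfolding err3_def s2_def e3v_def using cc stc by algebra
  have n2: "err2 g2 (a1 \<oplus> s1) (b1 \<oplus> t1) (a2 \<oplus> s2) (b2 \<oplus> t2) = \<ominus> (s1 \<otimes> s2)"
    unfolding err2_def t2_def s2_def e2v_def E_def using cc stc ec by algebra
  have n1: "err1 g1 (a1 \<oplus> s1) (b1 \<oplus> t1) (a2 \<oplus> s2) (b2 \<oplus> t2) = L1 \<ominus> (s1 \<otimes> t2 \<oplus> s2 \<otimes> t1)"
    unfolding err1_def L1_def e1v_def using cc stc ec by algebra
  have n0: "err0 g0 (a1 \<oplus> s1) (b1 \<oplus> t1) (a2 \<oplus> s2) (b2 \<oplus> t2) = L0 \<ominus> t1 \<otimes> t2"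
    unfolding err0_def L0_def e0v_def using cc stc ec by algebra
  have dPNm: "dv (N - m) PNm" unfolding PNm_def by (rule dv_Ppow)
  have ds1: "dv (N - m) s1" unfolding s1_def using dPNm by (intro dv_multL dv_multR)
  have dt1: "dv (N - m) t1" unfolding t1_def using dPNm by (intro dv_multL dv_multR)
  have de3: "dv (N - m) e3v" using dv_mono[of e3v "N - m" N] ec dv_Ppow_mult unfolding e3v_def e3(2) by simp
  have de2: "dv (N - m) e2v" using dv_mono[of e2v "N - m" N] ec dv_Ppow_mult unfolding e2v_def e2(2) by simp
  have ds2: "dv (N - m) s2" unfolding s2_def using de3 ds1 ec stc by (intro dv_minus) auto
  have dt2: "dv (N - m) t2" unfolding t2_def using de3 de2 ds1 dt1 ec stc cc DEc
    by (intro dv_minus dv_add dv_multR) auto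
  have NN: "Suc N \<le> (N - m) + (N - m)" using Nm by simp
  have q1: "dv (Suc N) (s1 \<otimes> s2)" using dv_mult2'[OF _ _ ds1 ds2 NN] stc by simp
  have q2: "dv (Suc N) (s1 \<otimes> t2)" using dv_mult2'[OF _ _ ds1 dt2 NN] stc by simp
  have q3: "dv (Suc N) (s2 \<otimes> t1)" using dv_mult2'[OF _ _ ds2 dt1 NN] stc by simp
  have q4: "dv (Suc N) (t1 \<otimes> t2)" using dv_mult2'[OF _ _ dt1 dt2 NN] stc by simp
  show ?thesis
  proof (intro bexI conjI)
    show "dv (Suc N) (err3 g3 (a1 \<oplus> s1) (b1 \<oplus> t1) (a2 \<oplus> s2) (b2 \<oplus> t2))" unfolding n3 by simp
    show "dv (Suc N) (err2 g2 (a1 \<oplus> s1) (b1 \<oplus> t1) (a2 \<oplus> s2) (b2 \<oplus> t2))" unfolding n2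
      using q1 stc by (intro dv_neg) auto
    show "dv (Suc N) (err1 g1 (a1 \<oplus> s1) (b1 \<oplus> t1) (a2 \<oplus> s2) (b2 \<oplus> t2))" unfolding n1 L1z
      using q2 q3 stc by (intro dv_minus dv_add) auto
    show "dv (Suc N) (err0 g0 (a1 \<oplus> s1) (b1 \<oplus> t1) (a2 \<oplus> s2) (b2 \<oplus> t2))" unfolding n0 L0z
      using q4 stc by (intro dv_minus) auto
  qed (use ds1 dt1 ds2 dt2 stc in auto)
qed

end

context padic_loc begin

lemma dv_eq_level: assumes "x \<in> carrier Z" "y \<in> carrier Z" "dv n (x \<ominus> y)" shows "x n = y n"
proof -
  have "(x n - y n) mod int p ^ n = 0" using assms by (simp add: dv_def cminus)
  then have "x n mod int p ^ n = y n mod int p ^ n" by (simp add: mod_eq_dvd_iff dvd_eq_mod_eq_0)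
  then show ?thesis using cself[OF assms(1)] cself[OF assms(2)] by simp
qed

lemma dv_eq_level_le: assumes "x \<in> carrier Z" "y \<in> carrier Z" "dv n (x \<ominus> y)" "k \<le> n" shows "x k = y k"
  using dv_eq_level[OF assms(1-3)] cle[OF assms(1) assms(4)] cle[OF assms(2) assms(4)] by simp

lemma dv_mult2'': "x \<in> carrier Z \<Longrightarrow> y \<in> carrier Z \<Longrightarrow> dv a x \<Longrightarrow> dv b y \<Longrightarrow> c \<le> a + b \<Longrightarrow> dv c (x \<otimes> y)"
  using dv_mult2[of x y a b] dv_mono[of "x \<otimes> y" c "a+b"] by simp

lemma det_perturb:
  assumes c0: "a10 \<in> carrier Z" "b10 \<in> carrier Z" "a20 \<in> carrier Z" "b20 \<in> carrier Z"
    and c: "a1 \<in> carrier Z" "b1 \<in> carrier Z" "a2 \<in> carrier Z" "b2 \<in> carrier Z"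
    and D0: "dv K (b10 \<ominus> b20)" and E0: "dv K (a10 \<ominus> a20)"
    and d: "dv M (a1 \<ominus> a10)" "dv M (b1 \<ominus> b10)" "dv M (a2 \<ominus> a20)" "dv M (b2 \<ominus> b20)"
    and KM: "K \<le> M"
  shows "dv K (b1 \<ominus> b2)" "dv K (a1 \<ominus> a2)" "dv (M + K) (detf a1 b1 a2 b2 \<ominus> detf a10 b10 a20 b20)"
proof -
  note cc = c0 c
  define da1 where "da1 = a1 \<ominus> a10"
  define db1 where "db1 = b1 \<ominus> b10"
  define da2 where "da2 = a2 \<ominus> a20"
  define db2 where "db2 = b2 \<ominus> b20"
  have dc: "da1 \<in> carrier Z" "db1 \<in> carrier Z" "da2 \<in> carrier Z" "db2 \<in> carrier Z"
    using cc by (simp_all add: da1_def db1_def da2_def db2_def)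
  have dd: "dv M da1" "dv M db1" "dv M da2" "dv M db2" using d by (simp_all add: da1_def db1_def da2_def db2_def)
  define D0 where "D0 = b10 \<ominus> b20"
  define E0 where "E0 = a10 \<ominus> a20"
  define dD where "dD = db1 \<ominus> db2"
  define dE where "dE = da1 \<ominus> da2"
  have c2: "D0 \<in> carrier Z" "E0 \<in> carrier Z" "dD \<in> carrier Z" "dE \<in> carrier Z"
    using cc dc by (simp_all add: D0_def E0_def dD_def dE_def)
  have ddE: "dv M dD" "dv M dE" unfolding dD_def dE_def using dd dc by (auto intro: dv_minus)
  have hD: "b1 \<ominus> b2 = D0 \<oplus> dD" unfolding D0_def dD_def db1_def db2_def using cc by algebra
  have hE: "a1 \<ominus> a2 = E0 \<oplus> dE" unfolding E0_def dE_def da1_def da2_def using cc by algebra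
  have dK: "dv K dD" "dv K dE" using ddE c2 KM dv_mono by blast+
  have dD0: "dv K D0" "dv K E0" using D0 E0 by (simp_all add: D0_def E0_def)
  show DK: "dv K (b1 \<ominus> b2)" unfolding hD using dK dD0 by (intro dv_add)
  show EK: "dv K (a1 \<ominus> a2)" unfolding hE using dK dD0 by (intro dv_add)
  define D where "D = D0 \<oplus> dD"
  define E where "E = E0 \<oplus> dE"
  have c3: "D \<in> carrier Z" "E \<in> carrier Z" using c2 by (simp_all add: D_def E_def)
  have dDE: "dv K D" "dv K E" using DK EK hD hE by (simp_all add: D_def E_def)
  have X: "detf a1 b1 a2 b2 = D \<otimes> D \<ominus> a1 \<otimes> E \<otimes> D \<oplus> b1 \<otimes> E \<otimes> E"
    unfolding detf_def hD hE D_def E_def ..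
  have Y: "detf a10 b10 a20 b20 = D0 \<otimes> D0 \<ominus> a10 \<otimes> E0 \<otimes> D0 \<oplus> b10 \<otimes> E0 \<otimes> E0"
    unfolding detf_def D0_def E0_def ..
  have ha1: "a1 = a10 \<oplus> da1" unfolding da1_def using cc by algebra
  have hb1: "b1 = b10 \<oplus> db1" unfolding db1_def using cc by algebra
  have i1: "D \<otimes> D \<ominus> D0 \<otimes> D0 = dD \<otimes> (D \<oplus> D0)" unfolding D_def using c2 by algebra
  have i2: "(a10 \<oplus> da1) \<otimes> E \<otimes> D \<ominus> a10 \<otimes> E0 \<otimes> D0 = da1 \<otimes> (E \<otimes> D) \<oplus> a10 \<otimes> (dE \<otimes> D \<oplus> E0 \<otimes> dD)"
    unfolding D_def E_def using c2 cc dc by algebra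
  have i3: "(b10 \<oplus> db1) \<otimes> E \<otimes> E \<ominus> b10 \<otimes> E0 \<otimes> E0 = db1 \<otimes> (E \<otimes> E) \<oplus> b10 \<otimes> (dE \<otimes> (E \<oplus> E0))"
    unfolding E_def using c2 cc dc by algebra
  have lin: "(A \<ominus> B \<oplus> C) \<ominus> (A0 \<ominus> B0 \<oplus> C0) = (A \<ominus> A0) \<ominus> (B \<ominus> B0) \<oplus> (C \<ominus> C0)"
    if "A \<in> carrier Z" "B \<in> carrier Z" "C \<in> carrier Z" "A0 \<in> carrier Z" "B0 \<in> carrier Z" "C0 \<in> carrier Z" for A B C A0 B0 C0
    using that by algebra
  have "detf a1 b1 a2 b2 \<ominus> detf a10 b10 a20 b20 =
     (D \<otimes> D \<ominus> (a10 \<oplus> da1) \<otimes> E \<otimes> D \<oplus> (b10 \<oplus> db1) \<otimes> E \<otimes> E)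
     \<ominus> (D0 \<otimes> D0 \<ominus> a10 \<otimes> E0 \<otimes> D0 \<oplus> b10 \<otimes> E0 \<otimes> E0)"
    unfolding X Y by (subst ha1, subst hb1, rule refl)
  also have "\<dots> = dD \<otimes> (D \<oplus> D0) \<ominus> (da1 \<otimes> (E \<otimes> D) \<oplus> a10 \<otimes> (dE \<otimes> D \<oplus> E0 \<otimes> dD))
         \<oplus> (db1 \<otimes> (E \<otimes> E) \<oplus> b10 \<otimes> (dE \<otimes> (E \<oplus> E0)))"
    unfolding i1[symmetric] i2[symmetric] i3[symmetric] using c2 c3 cc dc by (intro lin) auto
  finally have eqd: "detf a1 b1 a2 b2 \<ominus> detf a10 b10 a20 b20 = dD \<otimes> (D \<oplus> D0) \<ominus> (da1 \<otimes> (E \<otimes> D) \<oplus> a10 \<otimes> (dE \<otimes> D \<oplus> E0 \<otimes> dD))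
         \<oplus> (db1 \<otimes> (E \<otimes> E) \<oplus> b10 \<otimes> (dE \<otimes> (E \<oplus> E0)))" .
  show "dv (M + K) (detf a1 b1 a2 b2 \<ominus> detf a10 b10 a20 b20)"
  proof -
    have 1: "dv (M+K) (dD \<otimes> (D \<oplus> D0))" using c2 c3 ddE dDE dD0 dv_mult2''[of dD "D \<oplus> D0" M K "M+K"] dv_add by simp
    have 2: "dv (M+K) (da1 \<otimes> (E \<otimes> D))" using dc c3 dd dDE dv_mult2''[of da1 "E \<otimes> D" M K "M+K"] dv_multR by simp
    have 3: "dv (M+K) (dE \<otimes> D)" using c2 c3 ddE dDE dv_mult2''[of dE D M K "M+K"] by simp
    have 4: "dv (M+K) (E0 \<otimes> dD)" using c2 ddE dD0 dv_mult2''[of E0 dD K M "M+K"] by simp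
    have 5: "dv (M+K) (db1 \<otimes> (E \<otimes> E))" using dc c3 dd dDE dv_mult2''[of db1 "E \<otimes> E" M K "M+K"] dv_multR by simp
    have 6: "dv (M+K) (dE \<otimes> (E \<oplus> E0))" using c2 c3 ddE dDE dD0 dv_mult2''[of dE "E \<oplus> E0" M K "M+K"] dv_add by simp
    have 7: "dv (M+K) (a10 \<otimes> (dE \<otimes> D \<oplus> E0 \<otimes> dD))" using dv_add[OF 3 4] by (rule dv_multR)
    have 8: "dv (M+K) (b10 \<otimes> (dE \<otimes> (E \<oplus> E0)))" using 6 by (rule dv_multR)
    have 9: "dv (M+K) (da1 \<otimes> (E \<otimes> D) \<oplus> a10 \<otimes> (dE \<otimes> D \<oplus> E0 \<otimes> dD))" using 2 7 by (rule dv_add)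
    have 10: "dv (M+K) (db1 \<otimes> (E \<otimes> E) \<oplus> b10 \<otimes> (dE \<otimes> (E \<oplus> E0)))" using 5 8 by (rule dv_add)
    have 11: "dv (M+K) (dD \<otimes> (D \<oplus> D0) \<ominus> (da1 \<otimes> (E \<otimes> D) \<oplus> a10 \<otimes> (dE \<otimes> D \<oplus> E0 \<otimes> dD)))"
      by (rule dv_minus[OF _ _ 1 9]) (use cc c2 c3 dc in simp_all)
    have "dv (M+K) (dD \<otimes> (D \<oplus> D0) \<ominus> (da1 \<otimes> (E \<otimes> D) \<oplus> a10 \<otimes> (dE \<otimes> D \<oplus> E0 \<otimes> dD))
         \<oplus> (db1 \<otimes> (E \<otimes> E) \<oplus> b10 \<otimes> (dE \<otimes> (E \<oplus> E0))))" using 11 10 by (rule dv_add)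
    then show ?thesis by (simp only: eqd)
  qed
qed

end

context padic_loc begin

lemma limit_seq:
  assumes uc: "\<And>j. u j \<in> carrier Z" and ud: "\<And>j. dv (Suc j) (u (Suc j) \<ominus> u j)"
  shows "\<exists>L\<in>carrier Z. \<forall>n. L n = u n n \<and> (\<forall>j\<ge>n. u j n = u n n)"
proof -
  have st: "u j n = u n n" if "n \<le> j" for j n
    using that
  proof (induction j rule: dec_induct)
    case base then show ?case by simp
  next
    case (step j)
    have "u (Suc j) n = u j n" using dv_eq_level_le[OF uc uc ud[of j], of n] step(1) by simp
    then show ?case using step by simp
  qed
  define L where "L = (\<lambda>n. u n n)"
  have "L \<in> carrier Z"
    unfolding Z_def Zp_carrier
  proof (intro allI conjI)
    fix n
    show "0 \<le> L n" "L n < int p ^ n" unfolding L_def using crange[OF uc[of n], of n] by auto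
    have "u (Suc n) (Suc n) mod int p ^ n = u (Suc n) n" using cle[OF uc[of "Suc n"], of n "Suc n"] by simp
    then show "L n = L (Suc n) mod int p ^ n" unfolding L_def using st[of n "Suc n"] by simp
  qed
  moreover have "\<forall>n. L n = u n n \<and> (\<forall>j\<ge>n. u j n = u n n)" unfolding L_def using st by blast
  ultimately show ?thesis by blast
qed

lemma err_level:
  assumes c: "a1 \<in> carrier Z" "b1 \<in> carrier Z" "a2 \<in> carrier Z" "b2 \<in> carrier Z"
    and c': "a1' \<in> carrier Z" "b1' \<in> carrier Z" "a2' \<in> carrier Z" "b2' \<in> carrier Z"
    and g: "g0 \<in> carrier Z" "g1 \<in> carrier Z" "g2 \<in> carrier Z" "g3 \<in> carrier Z"
    and e: "a1 n = a1' n" "b1 n = b1' n" "a2 n = a2' n" "b2 n = b2' n"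
  shows "err3 g3 a1 b1 a2 b2 n = err3 g3 a1' b1' a2' b2' n"
    "err2 g2 a1 b1 a2 b2 n = err2 g2 a1' b1' a2' b2' n"
    "err1 g1 a1 b1 a2 b2 n = err1 g1 a1' b1' a2' b2' n"
    "err0 g0 a1 b1 a2 b2 n = err0 g0 a1' b1' a2' b2' n"
  using c c' g e by (simp_all add: err3_def err2_def err1_def err0_def cminus cadd cmult)



lemma self_minus: "a \<in> carrier Z \<Longrightarrow> a \<ominus> a = \<zero>" by algebra

lemma hensel:
  assumes c0: "a10 \<in> carrier Z" "b10 \<in> carrier Z" "a20 \<in> carrier Z" "b20 \<in> carrier Z"
    and g: "g0 \<in> carrier Z" "g1 \<in> carrier Z" "g2 \<in> carrier Z" "g3 \<in> carrier Z"
    and D0: "dv K (b10 \<ominus> b20)" and E0: "dv K (a10 \<ominus> a20)" and KM: "K \<le> Suc m"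
    and det0: "detf a10 b10 a20 b20 = P [^] (K + m) \<otimes> w0" and w0c: "w0 \<in> carrier Z" and w0u: "w0 1 \<noteq> 0"
    and err: "dv N0 (err3 g3 a10 b10 a20 b20)" "dv N0 (err2 g2 a10 b10 a20 b20)"
       "dv N0 (err1 g1 a10 b10 a20 b20)" "dv N0 (err0 g0 a10 b10 a20 b20)"
    and N0: "2 * m + 1 \<le> N0"
  shows "\<exists>a1\<in>carrier Z. \<exists>b1\<in>carrier Z. \<exists>a2\<in>carrier Z. \<exists>b2\<in>carrier Z.
     err3 g3 a1 b1 a2 b2 = \<zero> \<and> err2 g2 a1 b1 a2 b2 = \<zero> \<and> err1 g1 a1 b1 a2 b2 = \<zero> \<and> err0 g0 a1 b1 a2 b2 = \<zero>"
proof -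
  define good where "good = (\<lambda>N (a1, b1, a2, b2). a1 \<in> carrier Z \<and> b1 \<in> carrier Z \<and> a2 \<in> carrier Z \<and> b2 \<in> carrier Z \<and>
      dv (Suc m) (a1 \<ominus> a10) \<and> dv (Suc m) (b1 \<ominus> b10) \<and> dv (Suc m) (a2 \<ominus> a20) \<and> dv (Suc m) (b2 \<ominus> b20) \<and>
      dv N (err3 g3 a1 b1 a2 b2) \<and> dv N (err2 g2 a1 b1 a2 b2) \<and> dv N (err1 g1 a1 b1 a2 b2) \<and> dv N (err0 g0 a1 b1 a2 b2))"
  define close where "close = (\<lambda>n (a1, b1, a2, b2) (a1', b1', a2', b2'). 
      dv n (a1' \<ominus> a1) \<and> dv n (b1' \<ominus> b1) \<and> dv n (a2' \<ominus> a2) \<and> dv n (b2' \<ominus> b2))"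
  have stepG: "\<exists>y. good (Suc N) y \<and> close (N - m) x y" if gx: "good N x" and NN: "2 * m + 1 \<le> N" for N x
  proof -
    obtain a1 b1 a2 b2 where xe: "x = (a1, b1, a2, b2)" by (cases x) auto
    have c: "a1 \<in> carrier Z" "b1 \<in> carrier Z" "a2 \<in> carrier Z" "b2 \<in> carrier Z"
      and d: "dv (Suc m) (a1 \<ominus> a10)" "dv (Suc m) (b1 \<ominus> b10)" "dv (Suc m) (a2 \<ominus> a20)" "dv (Suc m) (b2 \<ominus> b20)"
      and ee: "dv N (err3 g3 a1 b1 a2 b2)" "dv N (err2 g2 a1 b1 a2 b2)" "dv N (err1 g1 a1 b1 a2 b2)" "dv N (err0 g0 a1 b1 a2 b2)"
      using gx unfolding xe good_def by auto
    note pert = det_perturb[OF c0 c D0 E0 d KM]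
    obtain D' where D': "D' \<in> carrier Z" "b1 \<ominus> b2 = P [^] K \<otimes> D'" using dv_factor[OF _ pert(1)] c by auto
    obtain E' where E': "E' \<in> carrier Z" "a1 \<ominus> a2 = P [^] K \<otimes> E'" using dv_factor[OF _ pert(2)] c by auto
    have detc: "detf a1 b1 a2 b2 \<in> carrier Z" "detf a10 b10 a20 b20 \<in> carrier Z" using c c0 by (simp_all add: detf_def)
    obtain y where y: "y \<in> carrier Z" "detf a1 b1 a2 b2 \<ominus> detf a10 b10 a20 b20 = P [^] (Suc m + K) \<otimes> y"
      using dv_factor[OF _ pert(3)] detc by auto
    define w where "w = w0 \<oplus> P \<otimes> y"
    have wc: "w \<in> carrier Z" using w0c y by (simp add: w_def)
    have "P [^] (Suc m + K) = P [^] (K + m) \<otimes> P" by (simp add: add.commute)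
    note pe = this
    have "detf a1 b1 a2 b2 = detf a10 b10 a20 b20 \<oplus> (detf a1 b1 a2 b2 \<ominus> detf a10 b10 a20 b20)"
      using detc by algebra
    also have "\<dots> = detf a10 b10 a20 b20 \<oplus> P [^] (Suc m + K) \<otimes> y"
      by (simp only: y(2))
    also have "\<dots> = P [^] (K + m) \<otimes> w0 \<oplus> (P [^] (K + m) \<otimes> P) \<otimes> y"
      unfolding det0 pe ..
    finally have "detf a1 b1 a2 b2 = P [^] (K + m) \<otimes> w0 \<oplus> (P [^] (K + m) \<otimes> P) \<otimes> y" .
    also have "\<dots> = P [^] (K + m) \<otimes> w" unfolding w_def
      using w0c y(1) P_carrier nat_pow_closed[OF P_carrier, of "K + m"] by algebra
    finally have detw: "detf a1 b1 a2 b2 = P [^] (K + m) \<otimes> w" .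
    have "w 1 = w0 1"
    proof -
      have "(P \<otimes> y) 1 = 0" by (simp add: cmult cP)
      then show ?thesis unfolding w_def cadd using cself[OF w0c, of 1] by simp
    qed
    then obtain wi where wi: "wi \<in> carrier Z" "w \<otimes> wi = \<one>" using unit_inv[OF wc] w0u by auto
    have errc: "err3 g3 a1 b1 a2 b2 \<in> carrier Z" "err2 g2 a1 b1 a2 b2 \<in> carrier Z"
       "err1 g1 a1 b1 a2 b2 \<in> carrier Z" "err0 g0 a1 b1 a2 b2 \<in> carrier Z"
      using c g by (simp_all add: err3_def err2_def err1_def err0_def)
    obtain e3' where e3': "e3' \<in> carrier Z" "err3 g3 a1 b1 a2 b2 = P [^] N \<otimes> e3'" using dv_factor[OF errc(1) ee(1)] by auto
    obtain e2' where e2': "e2' \<in> carrier Z" "err2 g2 a1 b1 a2 b2 = P [^] N \<otimes> e2'" using dv_factor[OF errc(2) ee(2)] by auto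
    obtain e1' where e1': "e1' \<in> carrier Z" "err1 g1 a1 b1 a2 b2 = P [^] N \<otimes> e1'" using dv_factor[OF errc(3) ee(3)] by auto
    obtain e0' where e0': "e0' \<in> carrier Z" "err0 g0 a1 b1 a2 b2 = P [^] N \<otimes> e0'" using dv_factor[OF errc(4) ee(4)] by auto
    obtain s1 t1 s2 t2 where st: "s1 \<in> carrier Z" "t1 \<in> carrier Z" "s2 \<in> carrier Z" "t2 \<in> carrier Z"
       "dv (N - m) s1" "dv (N - m) t1" "dv (N - m) s2" "dv (N - m) t2"
       "dv (Suc N) (err3 g3 (a1 \<oplus> s1) (b1 \<oplus> t1) (a2 \<oplus> s2) (b2 \<oplus> t2))"
       "dv (Suc N) (err2 g2 (a1 \<oplus> s1) (b1 \<oplus> t1) (a2 \<oplus> s2) (b2 \<oplus> t2))"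
       "dv (Suc N) (err1 g1 (a1 \<oplus> s1) (b1 \<oplus> t1) (a2 \<oplus> s2) (b2 \<oplus> t2))"
       "dv (Suc N) (err0 g0 (a1 \<oplus> s1) (b1 \<oplus> t1) (a2 \<oplus> s2) (b2 \<oplus> t2))"
      using step[OF c g D' E' wc wi detw e3' e2' e1' e0' NN] by blast
    have mono: "dv (Suc m) s1" "dv (Suc m) t1" "dv (Suc m) s2" "dv (Suc m) t2"
      using st dv_mono[of _ "Suc m" "N - m"] NN by auto
    have sh: "(u \<oplus> s) \<ominus> u0 = (u \<ominus> u0) \<oplus> s" if "u \<in> carrier Z" "s \<in> carrier Z" "u0 \<in> carrier Z" for u s u0
      using that by algebra
    have sh2: "(u \<oplus> s) \<ominus> u = s" if "u \<in> carrier Z" "s \<in> carrier Z" for u s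
      using that by algebra
    have "good (Suc N) (a1 \<oplus> s1, b1 \<oplus> t1, a2 \<oplus> s2, b2 \<oplus> t2)"
      unfolding good_def using c c0 st(1-4) st(9-12) d mono
      by (simp add: sh dv_add)
    moreover have "close (N - m) x (a1 \<oplus> s1, b1 \<oplus> t1, a2 \<oplus> s2, b2 \<oplus> t2)"
      unfolding close_def xe using c st(1-8) by (simp add: sh2)
    ultimately show ?thesis by blast
  qed
  define nxt where "nxt = (\<lambda>j x. SOME y. good (Suc (N0 + j)) y \<and> close (N0 + j - m) x y)"
  define xs where "xs = rec_nat (a10, b10, a20, b20) nxt"
  have xsS: "xs (Suc j) = nxt j (xs j)" for j by (simp add: xs_def)
  have nx: "good (Suc (N0 + j)) (xs (Suc j)) \<and> close (N0 + j - m) (xs j) (xs (Suc j))"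
    if "good (N0 + j) (xs j)" for j
  proof -
    have ex: "\<exists>y. good (Suc (N0 + j)) y \<and> close (N0 + j - m) (xs j) y" using stepG[OF that] N0 by simp
    show ?thesis unfolding xsS nxt_def by (rule someI_ex[OF ex])
  qed
  have G0: "good (N0 + j) (xs j)" for j
  proof (induction j)
    case 0
    show ?case unfolding xs_def good_def using c0 err by (simp add: self_minus)
  next
    case (Suc j)
    then show ?case using nx[OF Suc] by simp
  qed
  have G: "good (N0 + j) (xs j) \<and> good (Suc (N0 + j)) (xs (Suc j)) \<and> close (N0 + j - m) (xs j) (xs (Suc j))" for j
    using G0[of j] nx[OF G0[of j]] by simp
  define A1 where "A1 = (\<lambda>j. fst (xs j))"
  define B1 where "B1 = (\<lambda>j. fst (snd (xs j)))"
  define A2 where "A2 = (\<lambda>j. fst (snd (snd (xs j))))"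
  define B2 where "B2 = (\<lambda>j. snd (snd (snd (xs j))))"
  have xse: "xs j = (A1 j, B1 j, A2 j, B2 j)" for j by (simp add: A1_def B1_def A2_def B2_def)
  have gj: "A1 j \<in> carrier Z \<and> B1 j \<in> carrier Z \<and> A2 j \<in> carrier Z \<and> B2 j \<in> carrier Z \<and>
      dv (N0 + j) (err3 g3 (A1 j) (B1 j) (A2 j) (B2 j)) \<and> dv (N0 + j) (err2 g2 (A1 j) (B1 j) (A2 j) (B2 j)) \<and>
      dv (N0 + j) (err1 g1 (A1 j) (B1 j) (A2 j) (B2 j)) \<and> dv (N0 + j) (err0 g0 (A1 j) (B1 j) (A2 j) (B2 j))" for j
    using conjunct1[OF G[of j]] unfolding xse good_def by simp
  have cj: "dv (N0 + j - m) (A1 (Suc j) \<ominus> A1 j) \<and> dv (N0 + j - m) (B1 (Suc j) \<ominus> B1 j) \<and>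
      dv (N0 + j - m) (A2 (Suc j) \<ominus> A2 j) \<and> dv (N0 + j - m) (B2 (Suc j) \<ominus> B2 j)" for j
    using conjunct2[OF conjunct2[OF G[of j]]] unfolding xse close_def by simp
  have le: "Suc j \<le> N0 + j - m" for j using N0 by simp
  have lim: "\<exists>L\<in>carrier Z. \<forall>n. L n = u n n" if uc: "\<And>j. u j \<in> carrier Z"
     and ud: "\<And>j. dv (N0 + j - m) (u (Suc j) \<ominus> u j)" for u
  proof -
    have "dv (Suc j) (u (Suc j) \<ominus> u j)" for j using dv_mono[OF _ le ud[of j]] uc by simp
    from limit_seq[OF uc this] obtain L where "L \<in> carrier Z" "\<And>n. L n = u n n" by blast
    then show ?thesis by blast
  qed
  obtain L1 where L1: "L1 \<in> carrier Z" "\<And>n. L1 n = A1 n n" using lim[of A1] gj cj by blast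
  obtain L2 where L2: "L2 \<in> carrier Z" "\<And>n. L2 n = B1 n n" using lim[of B1] gj cj by blast
  obtain L3 where L3: "L3 \<in> carrier Z" "\<And>n. L3 n = A2 n n" using lim[of A2] gj cj by blast
  obtain L4 where L4: "L4 \<in> carrier Z" "\<And>n. L4 n = B2 n n" using lim[of B2] gj cj by blast
  have lev: "dv n (err3 g3 L1 L2 L3 L4) \<and> dv n (err2 g2 L1 L2 L3 L4) \<and> dv n (err1 g1 L1 L2 L3 L4) \<and> dv n (err0 g0 L1 L2 L3 L4)" for n
  proof -
    have c: "A1 n \<in> carrier Z" "B1 n \<in> carrier Z" "A2 n \<in> carrier Z" "B2 n \<in> carrier Z" using gj by auto
    note el = err_level[OF L1(1) L2(1) L3(1) L4(1) c g, of n]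
    have "dv (N0 + n) (err3 g3 (A1 n) (B1 n) (A2 n) (B2 n))" "dv (N0 + n) (err2 g2 (A1 n) (B1 n) (A2 n) (B2 n))"
      "dv (N0 + n) (err1 g1 (A1 n) (B1 n) (A2 n) (B2 n))" "dv (N0 + n) (err0 g0 (A1 n) (B1 n) (A2 n) (B2 n))"
      using gj by auto
    moreover have "err3 g3 (A1 n) (B1 n) (A2 n) (B2 n) \<in> carrier Z" "err2 g2 (A1 n) (B1 n) (A2 n) (B2 n) \<in> carrier Z"
      "err1 g1 (A1 n) (B1 n) (A2 n) (B2 n) \<in> carrier Z" "err0 g0 (A1 n) (B1 n) (A2 n) (B2 n) \<in> carrier Z"
      using c g by (simp_all add: err3_def err2_def err1_def err0_def)
    ultimately have "dv n (err3 g3 (A1 n) (B1 n) (A2 n) (B2 n))" "dv n (err2 g2 (A1 n) (B1 n) (A2 n) (B2 n))"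
      "dv n (err1 g1 (A1 n) (B1 n) (A2 n) (B2 n))" "dv n (err0 g0 (A1 n) (B1 n) (A2 n) (B2 n))"
      using dv_mono[of _ n "N0 + n"] by auto
    then show ?thesis using el L1(2) L2(2) L3(2) L4(2) unfolding dv_def by simp
  qed
  show ?thesis using L1(1) L2(1) L3(1) L4(1) lev dv_all by blast
qed

end


definition quadp :: "('a, 'b) ring_scheme \<Rightarrow> 'a \<Rightarrow> 'a \<Rightarrow> (nat \<Rightarrow> 'a)" where
  "quadp R a b = monom (UP R) \<one>\<^bsub>R\<^esub> 2 \<oplus>\<^bsub>UP R\<^esub> monom (UP R) a 1 \<oplus>\<^bsub>UP R\<^esub> monom (UP R) b 0"

context UP_cring begin

lemma quad_closed: "a \<in> carrier R \<Longrightarrow> b \<in> carrier R \<Longrightarrow> quadp R a b \<in> carrier P"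
  unfolding quadp_def P_def[symmetric] by simp

lemma coeff_quad: assumes "a \<in> carrier R" "b \<in> carrier R"
  shows "up_ring.coeff P (quadp R a b) n = (if n = 0 then b else if n = 1 then a else if n = 2 then \<one> else \<zero>)"
  unfolding quadp_def P_def[symmetric] using assms by auto

lemma coeff_quad_prod:
  assumes c: "a1 \<in> carrier R" "b1 \<in> carrier R" "a2 \<in> carrier R" "b2 \<in> carrier R"
  shows "up_ring.coeff P (quadp R a1 b1 \<otimes>\<^bsub>P\<^esub> quadp R a2 b2) 0 = b1 \<otimes> b2"
    "up_ring.coeff P (quadp R a1 b1 \<otimes>\<^bsub>P\<^esub> quadp R a2 b2) 1 = a1 \<otimes> b2 \<oplus> a2 \<otimes> b1"
    "up_ring.coeff P (quadp R a1 b1 \<otimes>\<^bsub>P\<^esub> quadp R a2 b2) 2 = b1 \<oplus> b2 \<oplus> a1 \<otimes> a2"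
    "up_ring.coeff P (quadp R a1 b1 \<otimes>\<^bsub>P\<^esub> quadp R a2 b2) 3 = a1 \<oplus> a2"
    "up_ring.coeff P (quadp R a1 b1 \<otimes>\<^bsub>P\<^esub> quadp R a2 b2) 4 = \<one>"
    "n > 4 \<Longrightarrow> up_ring.coeff P (quadp R a1 b1 \<otimes>\<^bsub>P\<^esub> quadp R a2 b2) n = \<zero>"
proof -
  note q = quad_closed[OF c(1,2)] quad_closed[OF c(3,4)]
  note cq = coeff_quad[OF c(1,2)] coeff_quad[OF c(3,4)]
  have f: "(\<lambda>i. up_ring.coeff P (quadp R a1 b1) i \<otimes> up_ring.coeff P (quadp R a2 b2) (m - i)) \<in> {..k} \<rightarrow> carrier R" for m k
    using q by auto
  show "up_ring.coeff P (quadp R a1 b1 \<otimes>\<^bsub>P\<^esub> quadp R a2 b2) 0 = b1 \<otimes> b2"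
    using q c by (simp add: cq)
  show "up_ring.coeff P (quadp R a1 b1 \<otimes>\<^bsub>P\<^esub> quadp R a2 b2) 1 = a1 \<otimes> b2 \<oplus> a2 \<otimes> b1"
    using q c f by (simp add: cq R.finsum_Suc R.m_comm)
  show "up_ring.coeff P (quadp R a1 b1 \<otimes>\<^bsub>P\<^esub> quadp R a2 b2) 2 = b1 \<oplus> b2 \<oplus> a1 \<otimes> a2"
    using q c f by (simp add: cq R.finsum_Suc numeral_2_eq_2) algebra
  show "up_ring.coeff P (quadp R a1 b1 \<otimes>\<^bsub>P\<^esub> quadp R a2 b2) 3 = a1 \<oplus> a2"
    using q c f by (simp add: cq R.finsum_Suc numeral_3_eq_3) algebra
  show "up_ring.coeff P (quadp R a1 b1 \<otimes>\<^bsub>P\<^esub> quadp R a2 b2) 4 = \<one>"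
    using q c f by (simp add: cq R.finsum_Suc eval_nat_numeral)
  show "n > 4 \<Longrightarrow> up_ring.coeff P (quadp R a1 b1 \<otimes>\<^bsub>P\<^esub> quadp R a2 b2) n = \<zero>"
  proof -
    assume n: "n > 4"
    have z: "up_ring.coeff P (quadp R a1 b1) i \<otimes> up_ring.coeff P (quadp R a2 b2) (n - i) = \<zero>" for i
        using n c by (cases "i = 0"; cases "i = 1"; cases "i = 2") (auto simp: cq)
    have "up_ring.coeff P (quadp R a1 b1 \<otimes>\<^bsub>P\<^esub> quadp R a2 b2) n =
       (\<Oplus>i\<in>{..n}. up_ring.coeff P (quadp R a1 b1) i \<otimes> up_ring.coeff P (quadp R a2 b2) (n - i))"
      using q by simp
    also have "\<dots> = (\<Oplus>i\<in>{..n}. \<zero>)"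
      by (rule R.finsum_cong') (auto simp: z)
    also have "\<dots> = \<zero>" by simp
    finally show ?thesis .
  qed
qed

lemma deg_quad: assumes "a \<in> carrier R" "b \<in> carrier R" "\<one> \<noteq> \<zero>"
  shows "deg R (quadp R a b) = 2"
proof (rule le_antisym)
  show "deg R (quadp R a b) \<le> 2" by (rule deg_aboveI) (use assms in \<open>auto simp: coeff_quad quad_closed\<close>)
  show "2 \<le> deg R (quadp R a b)" by (rule deg_belowI) (use assms in \<open>auto simp: coeff_quad quad_closed\<close>)
qed

lemma X2: "up_ring.monom P \<one> 1 [^]\<^bsub>P\<^esub> (2::nat) = up_ring.monom P \<one> 2"
proof -
  have "up_ring.monom P \<one> 1 [^]\<^bsub>P\<^esub> (2::nat) = up_ring.monom P \<one> 1 \<otimes>\<^bsub>P\<^esub> up_ring.monom P \<one> 1"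
    by (simp add: numeral_2_eq_2)
  also have "\<dots> = up_ring.monom P (\<one> \<otimes> \<one>) (1 + 1)" by (rule monom_mult[symmetric]) simp_all
  also have "\<dots> = up_ring.monom P \<one> 2" by (simp add: numeral_2_eq_2)
  finally show ?thesis .
qed

lemma f_quad1: "c \<in> carrier R \<Longrightarrow> d \<in> carrier R \<Longrightarrow>
   up_ring.monom P \<one> 1 [^]\<^bsub>P\<^esub> (2::nat) \<oplus>\<^bsub>P\<^esub> up_ring.monom P c 1 \<oplus>\<^bsub>P\<^esub> up_ring.monom P d 0 = quadp R c d"
  unfolding X2 quadp_def P_def[symmetric] by simp

lemma f_quad2: "c \<in> carrier R \<Longrightarrow> d \<in> carrier R \<Longrightarrow>
   up_ring.monom P \<one> 1 [^]\<^bsub>P\<^esub> (2::nat) \<ominus>\<^bsub>P\<^esub> up_ring.monom P c 1 \<oplus>\<^bsub>P\<^esub> up_ring.monom P d 0 = quadp R (\<ominus> c) d"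
  unfolding X2 quadp_def P_def[symmetric] a_minus_def by (simp add: monom_a_inv)

end


context padic_loc begin

lemma UPZ_cring: "UP_cring Z" by (simp add: UP_cring_def is_cring)

lemma one_ne_zero: "\<one> \<noteq> \<zero>"
proof
  assume "\<one> = \<zero>"
  then have "\<one> 1 = \<zero> 1" by simp
  then show False using p_ge2 by (simp add: cone czero)
qed

lemma minus_zero_eq: "x \<in> carrier Z \<Longrightarrow> y \<in> carrier Z \<Longrightarrow> x \<ominus> y = \<zero> \<Longrightarrow> x = y"
proof -
  assume c: "x \<in> carrier Z" "y \<in> carrier Z" and e: "x \<ominus> y = \<zero>"
  have "x = (x \<ominus> y) \<oplus> y" using c by algebra
  then show ?thesis using e c by simp
qed

lemma reduce_from_data:
  assumes gc: "g \<in> carrier (UP Z)" and gdeg: "deg Z g = 4" and g4: "up_ring.coeff (UP Z) g 4 = \<one>"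
    and c0: "a10 \<in> carrier Z" "b10 \<in> carrier Z" "a20 \<in> carrier Z" "b20 \<in> carrier Z"
    and D0: "dv K (b10 \<ominus> b20)" and E0: "dv K (a10 \<ominus> a20)" and KM: "K \<le> Suc m"
    and det0: "detf a10 b10 a20 b20 = P [^] (K + m) \<otimes> w0" and w0c: "w0 \<in> carrier Z" and w0u: "w0 1 \<noteq> 0"
    and N0: "2 * m + 1 \<le> N"
    and cong: "\<And>i. dv N (up_ring.coeff (UP Z) g i \<ominus> up_ring.coeff (UP Z) (quadp Z a10 b10 \<otimes>\<^bsub>UP Z\<^esub> quadp Z a20 b20) i)"
  shows "padic_poly_reducible p g"
proof -
  interpret U: UP_cring Z "UP Z" by (rule UPZ_cring)
  define gg where "gg = up_ring.coeff (UP Z) g"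
  have gcar: "gg i \<in> carrier Z" for i using gc by (simp add: gg_def)
  note cp0 = U.coeff_quad_prod[OF c0]
  have err: "dv N (err3 (gg 3) a10 b10 a20 b20)" "dv N (err2 (gg 2) a10 b10 a20 b20)"
     "dv N (err1 (gg 1) a10 b10 a20 b20)" "dv N (err0 (gg 0) a10 b10 a20 b20)"
    using cong[of 3] cong[of 2] cong[of 1] cong[of 0]
    unfolding cp0(1-4) gg_def err3_def err2_def err1_def err0_def by simp_all
  obtain a1 b1 a2 b2 where c: "a1 \<in> carrier Z" "b1 \<in> carrier Z" "a2 \<in> carrier Z" "b2 \<in> carrier Z"
    and z: "err3 (gg 3) a1 b1 a2 b2 = \<zero>" "err2 (gg 2) a1 b1 a2 b2 = \<zero>"
       "err1 (gg 1) a1 b1 a2 b2 = \<zero>" "err0 (gg 0) a1 b1 a2 b2 = \<zero>"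
    using hensel[OF c0 gcar gcar gcar gcar D0 E0 KM det0 w0c w0u err N0] by blast
  note cp = U.coeff_quad_prod[OF c]
  have eqs: "gg 3 = a1 \<oplus> a2" "gg 2 = b1 \<oplus> b2 \<oplus> a1 \<otimes> a2" "gg 1 = a1 \<otimes> b2 \<oplus> a2 \<otimes> b1" "gg 0 = b1 \<otimes> b2"
    using z c gcar by (auto simp: err3_def err2_def err1_def err0_def intro!: minus_zero_eq)
  have qc: "quadp Z a1 b1 \<in> carrier (UP Z)" "quadp Z a2 b2 \<in> carrier (UP Z)" using U.quad_closed c by auto
  have geq: "g = quadp Z a1 b1 \<otimes>\<^bsub>UP Z\<^esub> quadp Z a2 b2"
  proof (rule U.up_eqI)
    fix n
    show "up_ring.coeff (UP Z) g n = up_ring.coeff (UP Z) (quadp Z a1 b1 \<otimes>\<^bsub>UP Z\<^esub> quadp Z a2 b2) n"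
    proof (cases "n > 4")
      case True
      then show ?thesis using U.deg_aboveD[of g n] gdeg gc cp(6)[OF True] by simp
    next
      case False
      then have "n = 0 \<or> n = 1 \<or> n = 2 \<or> n = 3 \<or> n = 4" by auto
      then show ?thesis using eqs cp g4 unfolding gg_def by auto
    qed
  qed (use gc qc in auto)
  have d: "deg Z (quadp Z a1 b1) = 2" "deg Z (quadp Z a2 b2) = 2"
    using U.deg_quad[OF c(1,2) one_ne_zero] U.deg_quad[OF c(3,4) one_ne_zero] by auto
  show ?thesis unfolding padic_poly_reducible_def Z_def[symmetric]
    apply (rule bexI[of _ "quadp Z a1 b1"])
     apply (rule bexI[of _ "quadp Z a2 b2"])
    using qc geq d by auto
qed

end


context padic_loc begin

definition two where "two = \<one> \<oplus> \<one>"
lemma two_c [simp]: "two \<in> carrier Z" by (simp add: two_def)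

lemma unit_mult1: assumes "x \<in> carrier Z" "y \<in> carrier Z" "x 1 \<noteq> 0" "y 1 \<noteq> 0" shows "(x \<otimes> y) 1 \<noteq> 0"
proof -
  have r: "0 \<le> x 1" "x 1 < int p" "0 \<le> y 1" "y 1 < int p" using crange[OF assms(1), of 1] crange[OF assms(2), of 1] by auto
  have "\<not> int p dvd x 1" using r assms(3) by (auto simp: zdvd_not_zless)
  moreover have "\<not> int p dvd y 1" using r assms(4) by (auto simp: zdvd_not_zless)
  moreover have pr: "Factorial_Ring.prime (int p)" using prime_p by simp
  ultimately have "\<not> int p dvd x 1 * y 1" by (simp add: prime_dvd_mult_iff)
  then show ?thesis by (simp add: cmult dvd_eq_mod_eq_0)
qed

lemma addP1: assumes "x \<in> carrier Z" shows "(x \<oplus> P \<otimes> y) 1 = x 1"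
proof -
  have "(P \<otimes> y) 1 = 0" by (simp add: cmult cP)
  then show ?thesis using cself[OF assms, of 1] by (simp add: cadd)
qed

lemma two1: assumes "odd p" shows "two 1 \<noteq> 0"
proof -
  have "p \<noteq> 2" using assms by auto
  then have "p > 2" using p_ge2 by simp
  then show ?thesis by (simp add: two_def cadd cone)
qed

lemma P1: "P [^] (1::nat) = P" by simp

lemma nondiv1: assumes "x \<in> carrier Z" "\<not> P divides x" shows "x 1 \<noteq> 0"
  using assms divides_iff_dv[OF assms(1), of 1] by (simp add: dv_def)

lemma nondiv_quot: assumes "u \<in> carrier Z" "\<not> P [^] Suc k divides (P [^] k \<otimes> u)" shows "u 1 \<noteq> 0"
proof
  assume "u 1 = 0"
  then obtain u' where u': "u' \<in> carrier Z" "u = P [^] (1::nat) \<otimes> u'" using dv_factor[OF assms(1), of 1] by (auto simp: dv_def)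
  have "P [^] k \<otimes> u = P [^] Suc k \<otimes> u'" unfolding u'(2) P1 using u'(1) by (simp add: m_assoc)
  then have "P [^] Suc k divides (P [^] k \<otimes> u)" unfolding factor_def using u'(1) by blast
  then show False using assms(2) by simp
qed

lemma det_init: assumes c: "al \<in> carrier Z" "be \<in> carrier Z" "ga \<in> carrier Z"
  shows "detf (P \<otimes> al) (P \<otimes> be) (\<ominus> (P \<otimes> al)) (P \<otimes> ga) =
     P \<otimes> P \<otimes> ((be \<ominus> ga) \<otimes> (be \<ominus> ga) \<oplus> two \<otimes> P \<otimes> al \<otimes> al \<otimes> (be \<oplus> ga))"
proof -
  define d where "d = be \<ominus> ga"
  have dc: "d \<in> carrier Z" using c by (simp add: d_def)
  have 1: "P \<otimes> be \<ominus> P \<otimes> ga = P \<otimes> d" unfolding d_def using c P_carrier by algebra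
  have 2: "P \<otimes> al \<ominus> \<ominus> (P \<otimes> al) = P \<otimes> (two \<otimes> al)" unfolding two_def using c P_carrier by algebra
  have 3: "be \<oplus> ga = two \<otimes> be \<ominus> d" unfolding two_def d_def using c by algebra
  have "detf (P \<otimes> al) (P \<otimes> be) (\<ominus> (P \<otimes> al)) (P \<otimes> ga) =
     (P \<otimes> d) \<otimes> (P \<otimes> d) \<ominus> (P \<otimes> al) \<otimes> (P \<otimes> (two \<otimes> al)) \<otimes> (P \<otimes> d) \<oplus> (P \<otimes> be) \<otimes> (P \<otimes> (two \<otimes> al)) \<otimes> (P \<otimes> (two \<otimes> al))"
    unfolding detf_def 1 2 ..
  also have "\<dots> = P \<otimes> P \<otimes> (d \<otimes> d \<oplus> two \<otimes> P \<otimes> al \<otimes> al \<otimes> (two \<otimes> be \<ominus> d))"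
    using c dc P_carrier two_c by algebra
  also have "\<dots> = P \<otimes> P \<otimes> ((be \<ominus> ga) \<otimes> (be \<ominus> ga) \<oplus> two \<otimes> P \<otimes> al \<otimes> al \<otimes> (be \<oplus> ga))"
    unfolding 3 d_def ..
  finally show ?thesis .
qed


lemma Ppow_Suc': "P [^] Suc k = P [^] k \<otimes> P" by simp

lemma case1:
  assumes c: "al \<in> carrier Z" "be \<in> carrier Z" "ga \<in> carrier Z"
    and al': "al' \<in> carrier Z" "al = P [^] k \<otimes> al'"
    and u: "u \<in> carrier Z" "be \<ominus> ga = P [^] k \<otimes> u" "u 1 \<noteq> 0"
    and gc: "g \<in> carrier (UP Z)" and gdeg: "deg Z g = 4" and g4: "up_ring.coeff (UP Z) g 4 = \<one>"
    and cong: "\<And>i. dv (2 * k + 4) (up_ring.coeff (UP Z) g i \<ominus> up_ring.coeff (UP Z)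
          (quadp Z (P \<otimes> al) (P \<otimes> be) \<otimes>\<^bsub>UP Z\<^esub> quadp Z (\<ominus> (P \<otimes> al)) (P \<otimes> ga)) i)"
  shows "padic_poly_reducible p g"
proof -
  define PK where "PK = P [^] k"
  have PKc: "PK \<in> carrier Z" by (simp add: PK_def)
  define w0 where "w0 = u \<otimes> u \<oplus> P \<otimes> (two \<otimes> al' \<otimes> al' \<otimes> (be \<oplus> ga))"
  have w0c: "w0 \<in> carrier Z" using c al' u by (simp add: w0_def)
  have w0u: "w0 1 \<noteq> 0" unfolding w0_def using addP1[of "u \<otimes> u"] unit_mult1[OF u(1) u(1) u(3) u(3)] u(1) by simp
  have PP: "P [^] (Suc k + Suc k) = (PK \<otimes> P) \<otimes> (PK \<otimes> P)"
  proof -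
    have "P [^] (Suc k + Suc k) = P [^] Suc k \<otimes> P [^] Suc k" by (rule nat_pow_mult[symmetric]) simp
    then show ?thesis by (simp add: PK_def)
  qed
  have det: "detf (P \<otimes> al) (P \<otimes> be) (\<ominus> (P \<otimes> al)) (P \<otimes> ga) = P [^] (Suc k + Suc k) \<otimes> w0"
  proof -
    have "detf (P \<otimes> al) (P \<otimes> be) (\<ominus> (P \<otimes> al)) (P \<otimes> ga) =
       P \<otimes> P \<otimes> ((be \<ominus> ga) \<otimes> (be \<ominus> ga) \<oplus> two \<otimes> P \<otimes> al \<otimes> al \<otimes> (be \<oplus> ga))" by (rule det_init[OF c])
    also have "\<dots> = P \<otimes> P \<otimes> ((PK \<otimes> u) \<otimes> (PK \<otimes> u) \<oplus> two \<otimes> P \<otimes> (PK \<otimes> al') \<otimes> (PK \<otimes> al') \<otimes> (be \<oplus> ga))"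
      unfolding u(2) al'(2) PK_def ..
    also have "\<dots> = (PK \<otimes> P) \<otimes> (PK \<otimes> P) \<otimes> w0" unfolding w0_def using c al' u PKc P_carrier two_c by algebra
    finally show ?thesis unfolding PP .
  qed
  have D0: "dv (Suc k) (P \<otimes> be \<ominus> P \<otimes> ga)"
  proof -
    have "P \<otimes> be \<ominus> P \<otimes> ga = P \<otimes> (be \<ominus> ga)" using c P_carrier by algebra
    also have "\<dots> = P [^] Suc k \<otimes> u" unfolding u(2) Ppow_Suc' using u(1) by (simp add: m_ac)
    finally show ?thesis by (simp only: dv_Ppow_mult)
  qed
  have E0: "dv (Suc k) (P \<otimes> al \<ominus> \<ominus> (P \<otimes> al))"
  proof -
    have "P \<otimes> al \<ominus> \<ominus> (P \<otimes> al) = P \<otimes> (PK \<otimes> al') \<oplus> P \<otimes> (PK \<otimes> al')" unfolding al'(2) PK_def using c al' P_carrier by algebra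
    also have "\<dots> = (PK \<otimes> P) \<otimes> (two \<otimes> al')" unfolding two_def using al' PKc P_carrier by algebra
    also have "\<dots> = P [^] Suc k \<otimes> (two \<otimes> al')" unfolding PK_def by simp
    finally show ?thesis by (simp only: dv_Ppow_mult)
  qed
  show ?thesis
    by (rule reduce_from_data[OF gc gdeg g4 _ _ _ _ D0 E0 _ det w0c w0u _ cong])
       (use c in auto)
qed

lemma case2:
  assumes c: "al \<in> carrier Z" "be \<in> carrier Z" "ga \<in> carrier Z" and odd: "odd p" and b1: "be 1 \<noteq> 0"
    and al': "al' \<in> carrier Z" "al = P [^] k \<otimes> al'" "al' 1 \<noteq> 0"
    and v: "v \<in> carrier Z" "be \<ominus> ga = P [^] Suc k \<otimes> v"
    and gc: "g \<in> carrier (UP Z)" and gdeg: "deg Z g = 4" and g4: "up_ring.coeff (UP Z) g 4 = \<one>"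
    and cong: "\<And>i. dv (2 * k + 5) (up_ring.coeff (UP Z) g i \<ominus> up_ring.coeff (UP Z)
          (quadp Z (P \<otimes> al) (P \<otimes> be) \<otimes>\<^bsub>UP Z\<^esub> quadp Z (\<ominus> (P \<otimes> al)) (P \<otimes> ga)) i)"
  shows "padic_poly_reducible p g"
proof -
  define PK where "PK = P [^] k"
  have PKc: "PK \<in> carrier Z" by (simp add: PK_def)
  define Xw where "Xw = two \<otimes> two \<otimes> al' \<otimes> al' \<otimes> be"
  define w0 where "w0 = Xw \<oplus> P \<otimes> (v \<otimes> v \<ominus> two \<otimes> al' \<otimes> al' \<otimes> PK \<otimes> v)"
  have Xwc: "Xw \<in> carrier Z" using c al' by (simp add: Xw_def)
  have w0c: "w0 \<in> carrier Z" using Xwc al' v PKc by (simp add: w0_def)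
  have t: "two 1 \<noteq> 0" by (rule two1[OF odd])
  have "Xw 1 \<noteq> 0" unfolding Xw_def
    using unit_mult1 t al'(1,3) c(2) b1 two_c by (simp add: unit_mult1)
  then have w0u: "w0 1 \<noteq> 0" unfolding w0_def using addP1[OF Xwc] by simp
  have PP: "P [^] (Suc k + Suc (Suc k)) = (PK \<otimes> P) \<otimes> (PK \<otimes> P \<otimes> P)"
  proof -
    have "P [^] (Suc k + Suc (Suc k)) = P [^] Suc k \<otimes> P [^] Suc (Suc k)" by (rule nat_pow_mult[symmetric]) simp
    then show ?thesis by (simp add: PK_def)
  qed
  have bg: "be \<oplus> ga = two \<otimes> be \<ominus> (be \<ominus> ga)" unfolding two_def using c by algebra
  have det: "detf (P \<otimes> al) (P \<otimes> be) (\<ominus> (P \<otimes> al)) (P \<otimes> ga) = P [^] (Suc k + Suc (Suc k)) \<otimes> w0"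
  proof -
    have "detf (P \<otimes> al) (P \<otimes> be) (\<ominus> (P \<otimes> al)) (P \<otimes> ga) =
       P \<otimes> P \<otimes> ((be \<ominus> ga) \<otimes> (be \<ominus> ga) \<oplus> two \<otimes> P \<otimes> al \<otimes> al \<otimes> (two \<otimes> be \<ominus> (be \<ominus> ga)))"
      unfolding det_init[OF c] bg ..
    also have "\<dots> = P \<otimes> P \<otimes> ((PK \<otimes> P \<otimes> v) \<otimes> (PK \<otimes> P \<otimes> v) \<oplus> two \<otimes> P \<otimes> (PK \<otimes> al') \<otimes> (PK \<otimes> al') \<otimes> (two \<otimes> be \<ominus> (PK \<otimes> P \<otimes> v)))"
      unfolding v(2) al'(2) PK_def Ppow_Suc' ..
    also have "\<dots> = (PK \<otimes> P) \<otimes> (PK \<otimes> P \<otimes> P) \<otimes> w0"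
    proof -
      define Q where "Q = PK \<otimes> P"
      define cc where "cc = two \<otimes> al' \<otimes> al'"
      define S where "S = two \<otimes> be \<ominus> Q \<otimes> v"
      have Qc: "Q \<in> carrier Z" "cc \<in> carrier Z" "S \<in> carrier Z" using PKc al' c v by (simp_all add: Q_def cc_def S_def)
      have s1: "two \<otimes> P \<otimes> (PK \<otimes> al') \<otimes> (PK \<otimes> al') \<otimes> S = Q \<otimes> PK \<otimes> (cc \<otimes> S)"
        unfolding Q_def cc_def using PKc al' Qc P_carrier two_c by algebra
      have s2: "(Q \<otimes> v) \<otimes> (Q \<otimes> v) = Q \<otimes> PK \<otimes> (P \<otimes> v \<otimes> v)"
        unfolding Q_def using PKc v P_carrier by algebra
      have s4: "P \<otimes> v \<otimes> v \<oplus> cc \<otimes> S = w0"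
        unfolding w0_def Xw_def cc_def S_def Q_def using PKc v al' c P_carrier two_c by algebra
      have "(PK \<otimes> P \<otimes> v) \<otimes> (PK \<otimes> P \<otimes> v) \<oplus> two \<otimes> P \<otimes> (PK \<otimes> al') \<otimes> (PK \<otimes> al') \<otimes> (two \<otimes> be \<ominus> PK \<otimes> P \<otimes> v)
          = (Q \<otimes> v) \<otimes> (Q \<otimes> v) \<oplus> two \<otimes> P \<otimes> (PK \<otimes> al') \<otimes> (PK \<otimes> al') \<otimes> S" unfolding Q_def S_def ..
      also have "\<dots> = Q \<otimes> PK \<otimes> (P \<otimes> v \<otimes> v) \<oplus> Q \<otimes> PK \<otimes> (cc \<otimes> S)" unfolding s1 s2 ..
      also have "\<dots> = Q \<otimes> PK \<otimes> (P \<otimes> v \<otimes> v \<oplus> cc \<otimes> S)" using Qc PKc v P_carrier by algebra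
      also have "\<dots> = Q \<otimes> PK \<otimes> w0" unfolding s4 ..
      finally have inner: "(PK \<otimes> P \<otimes> v) \<otimes> (PK \<otimes> P \<otimes> v) \<oplus> two \<otimes> P \<otimes> (PK \<otimes> al') \<otimes> (PK \<otimes> al') \<otimes> (two \<otimes> be \<ominus> PK \<otimes> P \<otimes> v)
          = Q \<otimes> PK \<otimes> w0" .
      show ?thesis unfolding inner unfolding Q_def using PKc P_carrier w0c by algebra
    qed
    finally show ?thesis unfolding PP .
  qed
  have D0: "dv (Suc k) (P \<otimes> be \<ominus> P \<otimes> ga)"
  proof -
    have "P \<otimes> be \<ominus> P \<otimes> ga = P \<otimes> (be \<ominus> ga)" using c P_carrier by algebra
    also have "\<dots> = P [^] Suc k \<otimes> (P \<otimes> v)" unfolding v(2) using v(1) by (simp add: m_ac)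
    finally show ?thesis by (simp only: dv_Ppow_mult)
  qed
  have E0: "dv (Suc k) (P \<otimes> al \<ominus> \<ominus> (P \<otimes> al))"
  proof -
    have "P \<otimes> al \<ominus> \<ominus> (P \<otimes> al) = P \<otimes> (PK \<otimes> al') \<oplus> P \<otimes> (PK \<otimes> al')" unfolding al'(2) PK_def using c al' P_carrier by algebra
    also have "\<dots> = (PK \<otimes> P) \<otimes> (two \<otimes> al')" unfolding two_def using al' PKc P_carrier by algebra
    also have "\<dots> = P [^] Suc k \<otimes> (two \<otimes> al')" unfolding PK_def by simp
    finally show ?thesis by (simp only: dv_Ppow_mult)
  qed
  have N: "2 * Suc (Suc k) + 1 \<le> 2 * k + 5" by simp
  show ?thesis
    by (rule reduce_from_data[OF gc gdeg g4 _ _ _ _ D0 E0 _ det w0c w0u N cong])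
       (use c in auto)
qed

end


theorem claim3:
  fixes p k :: nat and \<alpha> \<beta> \<gamma> :: "nat \<Rightarrow> int"
  defines "Zp \<equiv> padic_int p"
  defines "P \<equiv> UP (padic_int p)"
  defines "pp \<equiv> padic_p p"
  defines "Xv \<equiv> monom (UP (padic_int p)) \<one>\<^bsub>padic_int p\<^esub> 1"
  defines "f \<equiv> (Xv [^]\<^bsub>P\<^esub> (2::nat) \<oplus>\<^bsub>P\<^esub> monom P (pp \<otimes>\<^bsub>Zp\<^esub> \<alpha>) 1 \<oplus>\<^bsub>P\<^esub> monom P (pp \<otimes>\<^bsub>Zp\<^esub> \<beta>) 0)
              \<otimes>\<^bsub>P\<^esub> (Xv [^]\<^bsub>P\<^esub> (2::nat) \<ominus>\<^bsub>P\<^esub> monom P (pp \<otimes>\<^bsub>Zp\<^esub> \<alpha>) 1 \<oplus>\<^bsub>P\<^esub> monom P (pp \<otimes>\<^bsub>Zp\<^esub> \<gamma>) 0)"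
  assumes "Factorial_Ring.prime p" and "odd p"
    and "\<alpha> \<in> carrier Zp" and "\<beta> \<in> carrier Zp" and "\<gamma> \<in> carrier Zp"
    and "\<not> pp divides\<^bsub>Zp\<^esub> \<beta>" and "\<not> pp divides\<^bsub>Zp\<^esub> \<gamma>"
    and "(\<alpha>, \<beta> \<ominus>\<^bsub>Zp\<^esub> \<gamma>) \<noteq> (\<zero>\<^bsub>Zp\<^esub>, \<zero>\<^bsub>Zp\<^esub>)"
    and "(pp [^]\<^bsub>Zp\<^esub> k) divides\<^bsub>Zp\<^esub> \<alpha>" and "(pp [^]\<^bsub>Zp\<^esub> k) divides\<^bsub>Zp\<^esub> (\<beta> \<ominus>\<^bsub>Zp\<^esub> \<gamma>)"
    and "\<forall>j. (pp [^]\<^bsub>Zp\<^esub> j) divides\<^bsub>Zp\<^esub> \<alpha> \<and> (pp [^]\<^bsub>Zp\<^esub> j) divides\<^bsub>Zp\<^esub> (\<beta> \<ominus>\<^bsub>Zp\<^esub> \<gamma>) \<longrightarrow> j \<le> k"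
  shows "(\<not> (pp [^]\<^bsub>Zp\<^esub> (k+1)) divides\<^bsub>Zp\<^esub> (\<beta> \<ominus>\<^bsub>Zp\<^esub> \<gamma>) \<longrightarrow>
           (\<forall>g\<in>carrier P. deg Zp g = 4 \<and> coeff P g 4 = \<one>\<^bsub>Zp\<^esub> \<and> padic_poly_cong p (2*k+4) g f
              \<longrightarrow> padic_poly_reducible p g))
       \<and> ((pp [^]\<^bsub>Zp\<^esub> (k+1)) divides\<^bsub>Zp\<^esub> (\<beta> \<ominus>\<^bsub>Zp\<^esub> \<gamma>) \<and> \<not> (pp [^]\<^bsub>Zp\<^esub> (k+1)) divides\<^bsub>Zp\<^esub> \<alpha> \<longrightarrow>
           (\<forall>g\<in>carrier P. deg Zp g = 4 \<and> coeff P g 4 = \<one>\<^bsub>Zp\<^esub> \<and> padic_poly_cong p (2*k+5) g f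
              \<longrightarrow> padic_poly_reducible p g))"
proof -
  have pr: "Factorial_Ring.prime p" and oddp: "odd p" using assms(6,7) by auto
  interpret L: padic_loc p "padic_int p" by (unfold_locales) (use pr in auto)
  interpret U: UP_cring "padic_int p" "UP (padic_int p)" by (rule L.UPZ_cring)
  have ppP: "pp = L.P" by (simp add: pp_def L.P_def)
  have ac: "\<alpha> \<in> carrier (padic_int p)" "\<beta> \<in> carrier (padic_int p)" "\<gamma> \<in> carrier (padic_int p)"
    using assms(8-10) Zp_def by auto
  have Pc: "L.P \<in> carrier (padic_int p)" by simp
  have feq: "f = quadp (padic_int p) (L.P \<otimes>\<^bsub>padic_int p\<^esub> \<alpha>) (L.P \<otimes>\<^bsub>padic_int p\<^esub> \<beta>) \<otimes>\<^bsub>UP (padic_int p)\<^esub>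
      quadp (padic_int p) (\<ominus>\<^bsub>padic_int p\<^esub> (L.P \<otimes>\<^bsub>padic_int p\<^esub> \<alpha>)) (L.P \<otimes>\<^bsub>padic_int p\<^esub> \<gamma>)"
    unfolding f_def Xv_def P_def Zp_def ppP
    using U.f_quad1 U.f_quad2 ac Pc by simp
  have hb: "\<not> L.P divides\<^bsub>padic_int p\<^esub> \<beta>" using assms(11) ppP Zp_def by simp
  have b1: "\<beta> 1 \<noteq> 0" by (rule L.nondiv1[OF ac(2) hb])
  have "(L.P [^]\<^bsub>padic_int p\<^esub> k) divides\<^bsub>padic_int p\<^esub> \<alpha>" using assms(14) ppP Zp_def by simp
  then obtain al' where al': "al' \<in> carrier (padic_int p)" "\<alpha> = L.P [^]\<^bsub>padic_int p\<^esub> k \<otimes>\<^bsub>padic_int p\<^esub> al'"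
    unfolding factor_def by blast
  have "(L.P [^]\<^bsub>padic_int p\<^esub> k) divides\<^bsub>padic_int p\<^esub> (\<beta> \<ominus>\<^bsub>padic_int p\<^esub> \<gamma>)" using assms(15) ppP Zp_def by simp
  then obtain u where u: "u \<in> carrier (padic_int p)" "\<beta> \<ominus>\<^bsub>padic_int p\<^esub> \<gamma> = L.P [^]\<^bsub>padic_int p\<^esub> k \<otimes>\<^bsub>padic_int p\<^esub> u"
    unfolding factor_def by blast
  have congI: "L.dv n (up_ring.coeff (UP (padic_int p)) g i \<ominus>\<^bsub>padic_int p\<^esub> up_ring.coeff (UP (padic_int p))
          (quadp (padic_int p) (L.P \<otimes>\<^bsub>padic_int p\<^esub> \<alpha>) (L.P \<otimes>\<^bsub>padic_int p\<^esub> \<beta>) \<otimes>\<^bsub>UP (padic_int p)\<^esub>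
      quadp (padic_int p) (\<ominus>\<^bsub>padic_int p\<^esub> (L.P \<otimes>\<^bsub>padic_int p\<^esub> \<alpha>)) (L.P \<otimes>\<^bsub>padic_int p\<^esub> \<gamma>)) i)"
    if gc: "g \<in> carrier (UP (padic_int p))" and cg: "padic_poly_cong p n g f" for g n i
  proof -
    have fc: "f \<in> carrier (UP (padic_int p))" unfolding feq using ac Pc U.quad_closed by simp
    have "(L.P [^]\<^bsub>padic_int p\<^esub> n) divides\<^bsub>padic_int p\<^esub>
       (up_ring.coeff (UP (padic_int p)) g i \<ominus>\<^bsub>padic_int p\<^esub> up_ring.coeff (UP (padic_int p)) f i)"
      using cg unfolding padic_poly_cong_def L.P_def by blast
    then have "L.dv n (up_ring.coeff (UP (padic_int p)) g i \<ominus>\<^bsub>padic_int p\<^esub> up_ring.coeff (UP (padic_int p)) f i)"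
      using L.divides_iff_dv gc fc by simp
    then show ?thesis unfolding feq .
  qed
  show ?thesis
  proof (intro conjI impI ballI)
    fix g assume c1: "\<not> (pp [^]\<^bsub>Zp\<^esub> (k+1)) divides\<^bsub>Zp\<^esub> (\<beta> \<ominus>\<^bsub>Zp\<^esub> \<gamma>)"
      and gP: "g \<in> carrier P" and gh: "deg Zp g = 4 \<and> up_ring.coeff P g 4 = \<one>\<^bsub>Zp\<^esub> \<and> padic_poly_cong p (2*k+4) g f"
    have gc: "g \<in> carrier (UP (padic_int p))" using gP P_def by simp
    have "\<not> L.P [^]\<^bsub>padic_int p\<^esub> Suc k divides\<^bsub>padic_int p\<^esub> (L.P [^]\<^bsub>padic_int p\<^esub> k \<otimes>\<^bsub>padic_int p\<^esub> u)"
      using c1 u(2) ppP Zp_def by simp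
    then have u1: "u 1 \<noteq> 0" by (rule L.nondiv_quot[OF u(1)])
    show "padic_poly_reducible p g"
      by (rule L.case1[OF ac al' u(1,2) u1 gc]) (use gh congI[OF gc] Zp_def P_def in auto)
  next
    fix g assume c2: "(pp [^]\<^bsub>Zp\<^esub> (k+1)) divides\<^bsub>Zp\<^esub> (\<beta> \<ominus>\<^bsub>Zp\<^esub> \<gamma>) \<and> \<not> (pp [^]\<^bsub>Zp\<^esub> (k+1)) divides\<^bsub>Zp\<^esub> \<alpha>"
      and gP: "g \<in> carrier P" and gh: "deg Zp g = 4 \<and> up_ring.coeff P g 4 = \<one>\<^bsub>Zp\<^esub> \<and> padic_poly_cong p (2*k+5) g f"
    have gc: "g \<in> carrier (UP (padic_int p))" using gP P_def by simp
    have "(L.P [^]\<^bsub>padic_int p\<^esub> Suc k) divides\<^bsub>padic_int p\<^esub> (\<beta> \<ominus>\<^bsub>padic_int p\<^esub> \<gamma>)" using c2 ppP Zp_def by simp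
    then obtain v where v: "v \<in> carrier (padic_int p)" "\<beta> \<ominus>\<^bsub>padic_int p\<^esub> \<gamma> = L.P [^]\<^bsub>padic_int p\<^esub> Suc k \<otimes>\<^bsub>padic_int p\<^esub> v"
      unfolding factor_def by blast
    have "\<not> L.P [^]\<^bsub>padic_int p\<^esub> Suc k divides\<^bsub>padic_int p\<^esub> (L.P [^]\<^bsub>padic_int p\<^esub> k \<otimes>\<^bsub>padic_int p\<^esub> al')"
      using c2 al'(2) ppP Zp_def by simp
    then have a1: "al' 1 \<noteq> 0" by (rule L.nondiv_quot[OF al'(1)])
    show "padic_poly_reducible p g"
      by (rule L.case2[OF ac oddp b1 al' a1 v gc]) (use gh congI[OF gc] Zp_def P_def in auto)
  qed
qed


end
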